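(* If the space $\mathcal{M}^{\mathrm{new}}(\Gamma^3,R)$ is non-zero, then its dimension is at least two.
   Context: $\Gamma^3=\{\left(\begin{smallmatrix}a&b\\c&d\end{smallmatrix}\right)\in\mathrm{PSL}_2(\mathbb{Z}) : ab+cd\equiv0\bmod3\}$, an index-3 subgroup of $\mathrm{PSL}_2(\mathbb{Z})$. $\mathcal{M}(\Gamma,R)$ denotes the space of Maass cusp forms on $\Gamma$ with Laplace eigenvalue $\frac14+R^2$: real-analytic $\Gamma$-invariant functions $f$ on the upper half-plane with $-y^2(\partial_x^2+\partial_y^2)f=(\frac14+R^2)f$, vanishing at all cusps, with finite Petersson norm $\int_{\mathcal F_\Gamma}|f|^2y^{-2}dxdy$. The old space of $\Gamma^3$ is $\mathcal{M}(\mathrm{PSL}_2(\mathbb{Z}),R)\subseteq\mathcal{M}(\Gamma^3,R)$ and $\mathcal{M}^{\mathrm{new}}(\Gamma^3,R)$ is its orthogonal complement in $\mathcal{M}(\Gamma^3,R)$ w.r.t. the Petersson inner product $\langle f,g\rangle_{\Gamma^3}=\int_{\mathcal F_{\Gamma^3}}f\bar g\,y^{-2}dxdy$. *)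

theory Defs
  imports "HOL-Analysis.Analysis"
begin

definition UHP :: "complex set" where
  "UHP = {z. Im z > 0}"

text \<open>Integer matrices (a,b,c,d) of determinant 1; PSL2(Z) is their image mod +-1.
  All conditions below are invariant under M -> -M.\<close>
definition SL2Z :: "(int \<times> int \<times> int \<times> int) set" where
  "SL2Z = {(a,b,c,d). a*d - b*c = 1}"

definition mob :: "int \<times> int \<times> int \<times> int \<Rightarrow> complex \<Rightarrow> complex" where
  "mob M z = (case M of (a,b,c,d) \<Rightarrow> (of_int a * z + of_int b) / (of_int c * z + of_int d))"

definition Gamma3 :: "(int \<times> int \<times> int \<times> int) set" where
  "Gamma3 = {(a,b,c,d). a*d - b*c = 1 \<and> (a*b + c*d) mod 3 = 0}"

definition F1 :: "complex set" where
  "F1 = {z. Im z > 0 \<and> -1/2 \<le> Re z \<and> Re z \<le> 1/2 \<and> cmod z \<ge> 1}"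

text \<open>Fundamental domain for Gamma^3: F1 \<union> T F1 \<union> T^2 F1 (I, T, T^2 are coset
  representatives of Gamma^3 in PSL2(Z)).\<close>
definition F3 :: "complex set" where
  "F3 = {z. Im z > 0 \<and> -1/2 \<le> Re z \<and> Re z \<le> 5/2 \<and> (\<forall>n::int. cmod (z - of_int n) \<ge> 1)}"

definition real_analytic_UHP :: "(complex \<Rightarrow> complex) \<Rightarrow> bool" where
  "real_analytic_UHP f \<longleftrightarrow> (\<forall>z0\<in>UHP. \<exists>r>0. \<exists>c :: nat \<times> nat \<Rightarrow> complex.
      \<forall>z\<in>ball z0 r. ((\<lambda>(j,k). c (j,k) * of_real ((Re z - Re z0) ^ j * (Im z - Im z0) ^ k))
                       has_sum f z) UNIV)"

definition dxx :: "(complex \<Rightarrow> complex) \<Rightarrow> complex \<Rightarrow> complex" where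
  "dxx f z = vector_derivative (\<lambda>s. vector_derivative (\<lambda>t. f (Complex t (Im z))) (at s)) (at (Re z))"

definition dyy :: "(complex \<Rightarrow> complex) \<Rightarrow> complex \<Rightarrow> complex" where
  "dyy f z = vector_derivative (\<lambda>s. vector_derivative (\<lambda>t. f (Complex (Re z) t)) (at s)) (at (Im z))"

text \<open>Maass cusp forms of spectral parameter R on the group G (a set of matrices in SL2Z)
  with fundamental domain F. Convention: f is extended by 0 outside the upper half-plane.\<close>
definition Maass :: "(int \<times> int \<times> int \<times> int) set \<Rightarrow> complex set \<Rightarrow> real \<Rightarrow> (complex \<Rightarrow> complex) set" where
  "Maass G F R = {f.
     (\<forall>z. z \<notin> UHP \<longrightarrow> f z = 0) \<and>
     real_analytic_UHP f \<and>
     (\<forall>M\<in>G. \<forall>z\<in>UHP. f (mob M z) = f z) \<and>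
     (\<forall>z\<in>UHP. - ((Im z)^2) * (dxx f z + dyy f z) = of_real (1/4 + R^2) * f z) \<and>
     (\<forall>M\<in>SL2Z. \<forall>e>0. \<exists>Y. \<forall>z. Im z > Y \<longrightarrow> cmod (f (mob M z)) < e) \<and>
     set_integrable lborel F (\<lambda>z. (cmod (f z))^2 / (Im z)^2)}"

definition petersson3 :: "(complex \<Rightarrow> complex) \<Rightarrow> (complex \<Rightarrow> complex) \<Rightarrow> complex" where
  "petersson3 f g = (LINT z:F3|lborel. f z * cnj (g z) / of_real ((Im z)^2))"

definition Maass_full :: "real \<Rightarrow> (complex \<Rightarrow> complex) set" where
  "Maass_full R = Maass SL2Z F1 R"

definition Maass_Gamma3 :: "real \<Rightarrow> (complex \<Rightarrow> complex) set" where
  "Maass_Gamma3 R = Maass Gamma3 F3 R"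

definition Maass_new3 :: "real \<Rightarrow> (complex \<Rightarrow> complex) set" where
  "Maass_new3 R = {f \<in> Maass_Gamma3 R. \<forall>g\<in>Maass_full R. petersson3 f g = 0}"

end

theory Submission
  imports Defs
begin


lemma SL2Z_iff: "(a,b,c,d) \<in> SL2Z \<longleftrightarrow> a*d - b*c = 1" by (simp add: SL2Z_def)
lemma Gamma3_iff: "(a,b,c,d) \<in> Gamma3 \<longleftrightarrow> a*d - b*c = 1 \<and> (a*b + c*d) mod 3 = 0"
  by (simp add: Gamma3_def)
lemma mob_simp: "mob (a,b,c,d) z = (of_int a * z + of_int b) / (of_int c * z + of_int d)"
  by (simp add: mob_def)

lemma denom_nz:
  assumes "a*d - b*c = (1::int)" "Im z > 0"
  shows "of_int c * z + of_int d \<noteq> (0::complex)"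
proof
  assume h: "of_int c * z + of_int d = 0"
  then have "Im (of_int c * z + of_int d) = 0" by simp
  then have "c = 0" using assms(2) by simp
  with h have "d = 0" by simp
  with \<open>c = 0\<close> assms(1) show False by simp
qed

lemma Im_mob:
  assumes "a*d - b*c = (1::int)" "Im z > 0"
  shows "Im (mob (a,b,c,d) z) = Im z / (cmod (of_int c * z + of_int d))^2"
proof -
  have "Im (of_int a * z + of_int b) * Re (of_int c * z + of_int d) - Re (of_int a * z + of_int b) * Im (of_int c * z + of_int d)
     = (real_of_int a * real_of_int d - real_of_int b * real_of_int c) * Im z"
    by (simp add: algebra_simps)
  also have "real_of_int a * real_of_int d - real_of_int b * real_of_int c = 1"
    using assms(1) by (metis of_int_1 of_int_diff of_int_mult)
  finally show ?thesis by (simp add: mob_simp Im_divide')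
qed

lemma mob_UHP:
  assumes "M \<in> SL2Z" "z \<in> UHP" shows "mob M z \<in> UHP"
proof -
  obtain a b c d where M: "M = (a,b,c,d)" by (cases M) auto
  have det: "a*d - b*c = 1" using assms(1) M by (simp add: SL2Z_def)
  have zp: "Im z > 0" using assms(2) by (simp add: UHP_def)
  have "cmod (of_int c * z + of_int d) > 0" using denom_nz[OF det zp] by simp
  then show ?thesis using Im_mob[OF det zp] zp M by (simp add: UHP_def)
qed

lemma mod3_range: "(x::int) mod 3 \<in> {0,1,2}" by auto

lemma normal_T:
  assumes "(a,b,c,d) \<in> Gamma3"
  shows "(a+c, b+d-a-c, c, d-c) \<in> Gamma3"
proof -
  have det: "a*d - b*c = 1" and m: "(a*b + c*d) mod 3 = 0" using assms by (auto simp: Gamma3_def)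
  have tab: "\<forall>a\<in>{0,1,2::int}. \<forall>b\<in>{0,1,2::int}. \<forall>c\<in>{0,1,2::int}. \<forall>d\<in>{0,1,2::int}. (a*d-b*c) mod 3 = 1 \<longrightarrow> (a*b+c*d) mod 3 = 0 \<longrightarrow>
   ((a+c)*(b+d-a-c) + c*(d-c)) mod 3 = 0" by simp
  have det3: "((a mod 3)*(d mod 3) - (b mod 3)*(c mod 3)) mod 3 = 1"
  proof -
    have "((a mod 3)*(d mod 3) - (b mod 3)*(c mod 3)) mod 3 = (a*d - b*c) mod 3"
      by (intro mod_add_cong mod_mult_cong mod_diff_cong; simp)
    then show ?thesis using det by simp
  qed
  have m3: "((a mod 3)*(b mod 3) + (c mod 3)*(d mod 3)) mod 3 = 0"
  proof -
    have "((a mod 3)*(b mod 3) + (c mod 3)*(d mod 3)) mod 3 = (a*b + c*d) mod 3"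
      by (intro mod_add_cong mod_mult_cong mod_diff_cong; simp)
    then show ?thesis using m by simp
  qed
  have e: "((a+c)*(b+d-a-c) + c*(d-c)) mod 3
      = (((a mod 3)+(c mod 3))*((b mod 3)+(d mod 3)-(a mod 3)-(c mod 3)) + (c mod 3)*((d mod 3)-(c mod 3))) mod 3"
    by (intro mod_add_cong mod_mult_cong mod_diff_cong; simp)
  have "(((a mod 3)+(c mod 3))*((b mod 3)+(d mod 3)-(a mod 3)-(c mod 3)) + (c mod 3)*((d mod 3)-(c mod 3))) mod 3 = 0"
    by (rule tab[rule_format, OF mod3_range mod3_range mod3_range mod3_range det3 m3])
  with e have "((a+c)*(b+d-a-c) + c*(d-c)) mod 3 = 0" by simp
  moreover have "(a+c)*(d-c) - (b+d-a-c)*c = 1" using det by (simp add: algebra_simps)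
  ultimately show ?thesis by (simp add: Gamma3_def)
qed

lemma coset3:
  assumes "a*d - b*c = (1::int)"
  shows "\<exists>k::int. k \<in> {0,1,2} \<and> (a, b - k*a, c, d - k*c) \<in> Gamma3"
proof -
  have tab: "\<forall>a\<in>{0,1,2::int}. \<forall>b\<in>{0,1,2::int}. \<forall>c\<in>{0,1,2::int}. \<forall>d\<in>{0,1,2::int}. (a*d-b*c) mod 3 = 1 \<longrightarrow>
     (\<exists>k\<in>{0,1,2::int}. (a*(b-k*a) + c*(d-k*c)) mod 3 = 0)" by simp
  have det3: "((a mod 3)*(d mod 3) - (b mod 3)*(c mod 3)) mod 3 = 1"
  proof -
    have "((a mod 3)*(d mod 3) - (b mod 3)*(c mod 3)) mod 3 = (a*d - b*c) mod 3"
      by (intro mod_add_cong mod_mult_cong mod_diff_cong; simp)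
    then show ?thesis using assms by simp
  qed
  have e: "\<And>k. (a*(b-k*a) + c*(d-k*c)) mod 3 = ((a mod 3)*((b mod 3) - k*(a mod 3)) + (c mod 3)*((d mod 3)-k*(c mod 3))) mod 3"
    by (intro mod_add_cong mod_mult_cong mod_diff_cong; simp)
  have "\<exists>k\<in>{0,1,2::int}. ((a mod 3)*((b mod 3) - k*(a mod 3)) + (c mod 3)*((d mod 3)-k*(c mod 3))) mod 3 = 0"
    by (rule tab[rule_format, OF mod3_range mod3_range mod3_range mod3_range det3])
  then obtain k where k: "k \<in> {0,1,2}" "((a mod 3)*((b mod 3) - k*(a mod 3)) + (c mod 3)*((d mod 3)-k*(c mod 3))) mod 3 = 0"
    by (rule bexE)
  then have "(a*(b-k*a) + c*(d-k*c)) mod 3 = 0" using e[of k] by simp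
  moreover have "a*(d-k*c) - (b-k*a)*c = 1" using assms by (simp add: algebra_simps)
  ultimately show ?thesis using k(1) by (auto simp: Gamma3_def)
qed



lemma hvd_affine:
  fixes \<phi> :: "real \<Rightarrow> complex"
  assumes "(\<phi> has_vector_derivative D) (at (m * s + a))"
  shows "((\<lambda>t. \<phi> (m * t + a)) has_vector_derivative (m *\<^sub>R D)) (at s)"
proof -
  have l: "((\<lambda>t. m * t + a) has_vector_derivative m) (at s)"
    unfolding has_real_derivative_iff_has_vector_derivative[symmetric]
    by (auto intro!: derivative_eq_intros)
  from vector_diff_chain_at[OF l, of \<phi> D] assms show ?thesis by (simp add: o_def)
qed

lemma VD_shift:
  fixes \<phi> :: "real \<Rightarrow> complex"
  shows "vector_derivative (\<lambda>t. \<phi> (t + a)) (at s) = vector_derivative \<phi> (at (s + a))"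
proof -
  have "\<And>D. ((\<lambda>t. \<phi> (t + a)) has_vector_derivative D) (at s) \<longleftrightarrow> (\<phi> has_vector_derivative D) (at (s + a))"
  proof
    fix D assume "(\<phi> has_vector_derivative D) (at (s + a))"
    then show "((\<lambda>t. \<phi> (t + a)) has_vector_derivative D) (at s)"
      using hvd_affine[of \<phi> D 1 s a] by simp
  next
    fix D assume "((\<lambda>t. \<phi> (t + a)) has_vector_derivative D) (at s)"
    then have "((\<lambda>t. \<phi> (1 * t + -a + a)) has_vector_derivative (1 *\<^sub>R D)) (at (s+a))"
      using hvd_affine[of "\<lambda>t. \<phi> (t + a)" D 1 "s+a" "-a"] by simp
    then show "(\<phi> has_vector_derivative D) (at (s + a))" by simp
  qed
  then show ?thesis unfolding vector_derivative_def by simp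
qed

lemma VD_refl:
  fixes \<psi> :: "real \<Rightarrow> complex"
  shows "vector_derivative (\<lambda>s. - \<psi> (a - s)) (at x) = vector_derivative \<psi> (at (a - x))"
proof -
  have "\<And>D. ((\<lambda>s. - \<psi> (a - s)) has_vector_derivative D) (at x) \<longleftrightarrow> (\<psi> has_vector_derivative D) (at (a - x))"
  proof
    fix D assume "(\<psi> has_vector_derivative D) (at (a - x))"
    then have "((\<lambda>t. \<psi> ((-1) * t + a)) has_vector_derivative ((-1) *\<^sub>R D)) (at x)"
      using hvd_affine[of \<psi> D "-1" x a] by simp
    then have "((\<lambda>t. - \<psi> ((-1) * t + a)) has_vector_derivative (- ((-1) *\<^sub>R D))) (at x)"
      by (rule has_vector_derivative_minus)
    then show "((\<lambda>s. - \<psi> (a - s)) has_vector_derivative D) (at x)" by simp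
  next
    fix D assume "((\<lambda>s. - \<psi> (a - s)) has_vector_derivative D) (at x)"
    then have "((\<lambda>t. - \<psi> (a - ((-1) * t + a))) has_vector_derivative ((-1) *\<^sub>R D)) (at (a - x))"
      using hvd_affine[of "\<lambda>s. - \<psi> (a - s)" D "-1" "a - x" a] by simp
    then have "((\<lambda>t. - (- \<psi> (a - ((-1) * t + a)))) has_vector_derivative (- ((-1) *\<^sub>R D))) (at (a - x))"
      by (rule has_vector_derivative_minus)
    then show "(\<psi> has_vector_derivative D) (at (a - x))" by simp
  qed
  then show ?thesis unfolding vector_derivative_def by simp
qed

lemma VD_refl_inner:
  fixes \<phi> :: "real \<Rightarrow> complex"
  assumes "(\<phi> has_vector_derivative D) (at (a - s))"
  shows "vector_derivative (\<lambda>t. \<phi> (a - t)) (at s) = - D"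
proof -
  have "((\<lambda>t. \<phi> ((-1) * t + a)) has_vector_derivative ((-1) *\<^sub>R D)) (at s)"
    using hvd_affine[of \<phi> D "-1" s a] assms by simp
  then have "((\<lambda>t. \<phi> (a - t)) has_vector_derivative (- D)) (at s)" by simp
  then show ?thesis by (rule vector_derivative_at)
qed

lemma HDIFF:
  assumes ra: "real_analytic_UHP f" and y: "y > 0"
  shows "\<exists>D. ((\<lambda>t. f (Complex t y)) has_vector_derivative D) (at s)"
proof -
  have "Complex s y \<in> UHP" using y by (simp add: UHP_def)
  then obtain r c where r: "r > 0" and hs: "\<And>z. z \<in> ball (Complex s y) r \<Longrightarrow>
      ((\<lambda>(j,k). c (j,k) * of_real ((Re z - s) ^ j * (Im z - y) ^ k)) has_sum f z) UNIV"
    using ra unfolding real_analytic_UHP_def by fastforce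
  define a where "a j = c (j,0)" for j
  have hs1: "((\<lambda>j. a j * of_real (t - s) ^ j) has_sum f (Complex t y)) UNIV" if "\<bar>t - s\<bar> < r" for t
  proof -
    have "Complex t y \<in> ball (Complex s y) r"
      using that by (simp add: dist_complex_def cmod_def)
    from hs[OF this] have "((\<lambda>(j,k). c (j,k) * of_real ((t - s) ^ j * 0 ^ k)) has_sum f (Complex t y)) UNIV"
      by simp
    then have "((\<lambda>(j,k). c (j,k) * of_real ((t - s) ^ j * 0 ^ k)) has_sum f (Complex t y)) (range (\<lambda>j. (j, 0::nat)))"
      by (rule has_sum_cong_neutral[THEN iffD1, rotated -1]) (auto simp: zero_power)
    then have "(((\<lambda>(j,k). c (j,k) * of_real ((t - s) ^ j * 0 ^ k)) \<circ> (\<lambda>j. (j, 0::nat))) has_sum f (Complex t y)) UNIV"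
      by (subst (asm) has_sum_reindex) (auto simp: inj_on_def)
    then show ?thesis by (simp add: a_def o_def)
  qed
  define G where "G w = (\<Sum>j. a j * w ^ j)" for w :: complex
  have eqG: "f (Complex t y) = G (of_real (t - s))" if "\<bar>t - s\<bar> < r" for t
    using has_sum_imp_sums[OF hs1[OF that]] by (simp add: G_def sums_iff)
  have sm: "summable (\<lambda>n. a n * (complex_of_real (r/2)) ^ n)"
    using has_sum_imp_sums[OF hs1[of "s + r/2"]] r by (simp add: sums_iff)
  have "DERIV G 0 :> (\<Sum>n. diffs a n * 0 ^ n)"
    unfolding G_def by (rule termdiffs_strong[OF sm]) (use r in simp)
  then have "((\<lambda>t. G (of_real t)) has_vector_derivative (\<Sum>n. diffs a n * 0 ^ n)) (at 0)"
    using has_vector_derivative_real_field[of G _ 0] by simp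
  then have "((\<lambda>t. G (of_real (1 * t + -s))) has_vector_derivative (1 *\<^sub>R (\<Sum>n. diffs a n * 0 ^ n))) (at s)"
    using hvd_affine[of "\<lambda>t. G (of_real t)" _ 1 s "-s"] by simp
  then have "((\<lambda>t. G (of_real (t - s))) has_vector_derivative (\<Sum>n. diffs a n * 0 ^ n)) (at s)"
    by simp
  then have "((\<lambda>t. f (Complex t y)) has_vector_derivative (\<Sum>n. diffs a n * 0 ^ n)) (at s)"
    by (rule has_vector_derivative_transform_within_open[of _ _ _ "ball s r"]) (use r eqG in \<open>auto simp: dist_real_def\<close>)
  then show ?thesis by blast
qed



definition tr :: "(complex \<Rightarrow> complex) \<Rightarrow> complex \<Rightarrow> complex" where "tr f z = f (z + 1)"
definition rfl :: "int \<Rightarrow> (complex \<Rightarrow> complex) \<Rightarrow> complex \<Rightarrow> complex" where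
  "rfl k f z = f (of_int k - cnj z)"

lemma normal_rfl:
  assumes "(a,b,c,d) \<in> Gamma3"
  shows "(a-2*c, 4*c+2*d-2*a-b, -c, 2*c+d) \<in> Gamma3"
proof -
  have det: "a*d - b*c = 1" and m: "(a*b + c*d) mod 3 = 0" using assms by (auto simp: Gamma3_def)
  have tab: "\<forall>a\<in>{0,1,2::int}. \<forall>b\<in>{0,1,2::int}. \<forall>c\<in>{0,1,2::int}. \<forall>d\<in>{0,1,2::int}. (a*d-b*c) mod 3 = 1 \<longrightarrow> (a*b+c*d) mod 3 = 0 \<longrightarrow>
   ((a-2*c)*(4*c+2*d-2*a-b) + (-c)*(2*c+d)) mod 3 = 0" by simp
  have det3: "((a mod 3)*(d mod 3) - (b mod 3)*(c mod 3)) mod 3 = 1"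
  proof -
    have "((a mod 3)*(d mod 3) - (b mod 3)*(c mod 3)) mod 3 = (a*d - b*c) mod 3"
      by (intro mod_add_cong mod_mult_cong mod_diff_cong; simp)
    then show ?thesis using det by simp
  qed
  have m3: "((a mod 3)*(b mod 3) + (c mod 3)*(d mod 3)) mod 3 = 0"
  proof -
    have "((a mod 3)*(b mod 3) + (c mod 3)*(d mod 3)) mod 3 = (a*b + c*d) mod 3"
      by (intro mod_add_cong mod_mult_cong mod_diff_cong; simp)
    then show ?thesis using m by simp
  qed
  have e: "((a-2*c)*(4*c+2*d-2*a-b) + (-c)*(2*c+d)) mod 3
      = (((a mod 3)-2*(c mod 3))*(4*(c mod 3)+2*(d mod 3)-2*(a mod 3)-(b mod 3)) + (-(c mod 3))*(2*(c mod 3)+(d mod 3))) mod 3"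
    by (intro mod_add_cong mod_mult_cong mod_diff_cong mod_minus_cong; simp)
  have "(((a mod 3)-2*(c mod 3))*(4*(c mod 3)+2*(d mod 3)-2*(a mod 3)-(b mod 3)) + (-(c mod 3))*(2*(c mod 3)+(d mod 3))) mod 3 = 0"
    by (rule tab[rule_format, OF mod3_range mod3_range mod3_range mod3_range det3 m3])
  with e have "((a-2*c)*(4*c+2*d-2*a-b) + (-c)*(2*c+d)) mod 3 = 0" by simp
  moreover have "(a-2*c)*(2*c+d) - (4*c+2*d-2*a-b)*(-c) = 1" using det by (simp add: algebra_simps)
  ultimately show ?thesis by (simp add: Gamma3_def)
qed

lemma mob_rfl:
  assumes det: "a*d - b*c = (1::int)" and z: "Im z > 0"
  shows "of_int k - cnj (mob (a,b,c,d) z) = mob (a - k*c, k*k*c + k*d - k*a - b, -c, k*c + d) (of_int k - cnj z)"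
proof -
  have nz: "of_int c * z + of_int d \<noteq> 0" using denom_nz[OF det z] .
  have nz': "of_int c * cnj z + of_int d \<noteq> 0"
  proof
    assume h: "of_int c * cnj z + of_int d = 0"
    have "cnj (of_int c * z + of_int d) = of_int c * cnj z + of_int d" by simp
    with h have "cnj (of_int c * z + of_int d) = 0" by simp
    with nz show False by (simp only: complex_cnj_zero_iff)
  qed
  have den: "of_int (- c) * (of_int k - cnj z) + of_int (k * c + d) = of_int c * cnj z + of_int d"
    by (simp add: algebra_simps)
  show ?thesis
    using nz' by (simp add: mob_simp den) (simp add: field_simps)
qed

lemma mob_tr:
  assumes det: "a*d - b*c = (1::int)" and z: "Im z > 0"
  shows "mob (a,b,c,d) z + 1 = mob (a+c, b+d, c, d) z"
  using denom_nz[OF det z] by (simp add: mob_simp field_simps)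

lemma mob_conjT:
  assumes det: "a*d - b*c = (1::int)" and z: "Im z > 0"
  shows "mob (a,b,c,d) z + 1 = mob (a+c, b+d-a-c, c, d-c) (z + 1)"
proof -
  have "of_int c * (z + 1) + of_int (d - c) = of_int c * z + (of_int d :: complex)" by (simp add: algebra_simps)
  then show ?thesis using denom_nz[OF det z] by (simp add: mob_simp) (simp add: field_simps)
qed

lemma UHP_iff: "z \<in> UHP \<longleftrightarrow> Im z > 0" by (simp add: UHP_def)

lemma RA_tr: assumes "real_analytic_UHP f" shows "real_analytic_UHP (tr f)"
  unfolding real_analytic_UHP_def
proof
  fix z0 assume "z0 \<in> UHP"
  then have "z0 + 1 \<in> UHP" by (simp add: UHP_iff)
  then obtain r c where r: "r > 0" and hs: "\<And>z. z \<in> ball (z0+1) r \<Longrightarrow>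
      ((\<lambda>(j,k). c (j,k) * of_real ((Re z - Re (z0+1)) ^ j * (Im z - Im (z0+1)) ^ k)) has_sum f z) UNIV"
    using assms unfolding real_analytic_UHP_def by blast
  show "\<exists>r>0. \<exists>c :: nat \<times> nat \<Rightarrow> complex. \<forall>z\<in>ball z0 r.
      ((\<lambda>(j,k). c (j,k) * of_real ((Re z - Re z0) ^ j * (Im z - Im z0) ^ k)) has_sum tr f z) UNIV"
  proof (intro exI[of _ r] conjI exI[of _ c] ballI)
    fix z assume "z \<in> ball z0 r"
    then have "z + 1 \<in> ball (z0+1) r" by (simp add: dist_norm)
    from hs[OF this] show "((\<lambda>(j,k). c (j,k) * of_real ((Re z - Re z0) ^ j * (Im z - Im z0) ^ k)) has_sum tr f z) UNIV"
      by (simp add: tr_def)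
  qed (use r in auto)
qed

lemma RA_rfl: assumes "real_analytic_UHP f" shows "real_analytic_UHP (rfl k f)"
  unfolding real_analytic_UHP_def
proof
  fix z0 assume "z0 \<in> UHP"
  then have "of_int k - cnj z0 \<in> UHP" by (simp add: UHP_iff)
  then obtain r c where r: "r > 0" and hs: "\<And>z. z \<in> ball (of_int k - cnj z0) r \<Longrightarrow>
      ((\<lambda>(j,l). c (j,l) * of_real ((Re z - Re (of_int k - cnj z0)) ^ j * (Im z - Im (of_int k - cnj z0)) ^ l)) has_sum f z) UNIV"
    using assms unfolding real_analytic_UHP_def by blast
  show "\<exists>r>0. \<exists>c :: nat \<times> nat \<Rightarrow> complex. \<forall>z\<in>ball z0 r.
      ((\<lambda>(j,l). c (j,l) * of_real ((Re z - Re z0) ^ j * (Im z - Im z0) ^ l)) has_sum rfl k f z) UNIV"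
  proof (intro exI[of _ r] conjI exI[of _ "\<lambda>(j,l). (-1)^j * c (j,l)"] ballI)
    fix z assume "z \<in> ball z0 r"
    then have "dist (of_int k - cnj z0) (of_int k - cnj z) < r"
      by (simp add: dist_norm) (metis complex_cnj_diff complex_mod_cnj norm_minus_commute)
    then have "of_int k - cnj z \<in> ball (of_int k - cnj z0) r" by simp
    from hs[OF this] have "((\<lambda>(j,l). c (j,l) * of_real ((Re z0 - Re z) ^ j * (Im z - Im z0) ^ l)) has_sum rfl k f z) UNIV"
      by (simp add: rfl_def)
    moreover have "(\<lambda>(j,l). c (j,l) * of_real ((Re z0 - Re z) ^ j * (Im z - Im z0) ^ l))
        = (\<lambda>(j,l). ((\<lambda>(j,l). (-1)^j * c (j,l)) (j,l)) * of_real ((Re z - Re z0) ^ j * (Im z - Im z0) ^ l))"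
    proof -
      have pw: "\<And>j. (Re z0 - Re z) ^ j = (-1)^j * (Re z - Re z0) ^ j"
        by (metis minus_diff_eq mult_minus1 power_minus)
      show ?thesis by (intro ext) (auto simp: pw split: prod.split)
    qed
    ultimately show "((\<lambda>(j,l). ((\<lambda>(j,l). (-1)^j * c (j,l)) (j,l)) * of_real ((Re z - Re z0) ^ j * (Im z - Im z0) ^ l)) has_sum rfl k f z) UNIV"
      by simp
  qed (use r in auto)
qed

lemma dxx_tr: "dxx (tr f) z = dxx f (z + 1)"
proof -
  define \<phi> where "\<phi> t = f (Complex t (Im z))" for t
  define u where "u s = vector_derivative \<phi> (at s)" for s
  have h: "\<And>t. Complex t (Im z) + 1 = Complex (t+1) (Im z)" by (simp add: complex_eq_iff)
  have e1: "(\<lambda>t. tr f (Complex t (Im z))) = (\<lambda>t. \<phi> (t + 1))"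
    by (simp add: tr_def h \<phi>_def)
  have e2: "(\<lambda>s. vector_derivative (\<lambda>t. \<phi> (t + 1)) (at s)) = (\<lambda>s. u (s + 1))"
    unfolding u_def by (simp add: VD_shift)
  have "dxx (tr f) z = vector_derivative (\<lambda>s. u (s + 1)) (at (Re z))"
    unfolding dxx_def e1 e2 ..
  also have "\<dots> = vector_derivative u (at (Re z + 1))" by (rule VD_shift)
  also have "\<dots> = dxx f (z + 1)" unfolding dxx_def u_def \<phi>_def by simp
  finally show ?thesis .
qed

lemma dyy_tr: "dyy (tr f) z = dyy f (z + 1)"
proof -
  have h: "\<And>t. Complex (Re z) t + 1 = Complex (Re z + 1) t" by (simp add: complex_eq_iff)
  have "(\<lambda>t. tr f (Complex (Re z) t)) = (\<lambda>t. f (Complex (Re (z + 1)) t))"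
    by (simp add: tr_def h)
  then show ?thesis unfolding dyy_def by simp
qed

lemma dyy_rfl: "dyy (rfl k f) z = dyy f (of_int k - cnj z)"
proof -
  have h: "\<And>t. of_int k - cnj (Complex (Re z) t) = Complex (of_int k - Re z) t" by (simp add: complex_eq_iff)
  have "(\<lambda>t. rfl k f (Complex (Re z) t)) = (\<lambda>t. f (Complex (Re (of_int k - cnj z)) t))"
    by (simp add: rfl_def h)
  then show ?thesis unfolding dyy_def by simp
qed

lemma dxx_rfl:
  assumes ra: "real_analytic_UHP f" and z: "Im z > 0"
  shows "dxx (rfl k f) z = dxx f (of_int k - cnj z)"
proof -
  define \<phi> where "\<phi> t = f (Complex t (Im z))" for t
  define u where "u s = vector_derivative \<phi> (at s)" for s
  have h: "\<And>t. of_int k - cnj (Complex t (Im z)) = Complex (of_int k - t) (Im z)" by (simp add: complex_eq_iff)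
  have e1: "(\<lambda>t. rfl k f (Complex t (Im z))) = (\<lambda>t. \<phi> (of_int k - t))"
    by (simp add: rfl_def \<phi>_def h)
  have inner: "vector_derivative (\<lambda>t. \<phi> (of_int k - t)) (at s) = - u (of_int k - s)" for s
  proof -
    obtain D where D: "(\<phi> has_vector_derivative D) (at (of_int k - s))"
      using HDIFF[OF ra z] unfolding \<phi>_def by blast
    then have "u (of_int k - s) = D" unfolding u_def by (rule vector_derivative_at)
    with VD_refl_inner[OF D] show ?thesis by simp
  qed
  have "dxx (rfl k f) z = vector_derivative (\<lambda>s. - u (of_int k - s)) (at (Re z))"
    unfolding dxx_def e1 inner ..
  also have "\<dots> = vector_derivative u (at (of_int k - Re z))" by (rule VD_refl)
  also have "\<dots> = dxx f (of_int k - cnj z)" unfolding dxx_def u_def \<phi>_def by simp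
  finally show ?thesis .
qed

lemma cusp_tr:
  assumes "\<forall>M\<in>SL2Z. \<forall>e>0. \<exists>Y. \<forall>z. Im z > Y \<longrightarrow> cmod (f (mob M z)) < e"
  shows "\<forall>M\<in>SL2Z. \<forall>e>0. \<exists>Y. \<forall>z. Im z > Y \<longrightarrow> cmod (tr f (mob M z)) < e"
proof (intro ballI allI impI)
  fix M :: "int \<times> int \<times> int \<times> int" and e :: real assume M: "M \<in> SL2Z" and e: "e > 0"
  obtain a b c d where Md: "M = (a,b,c,d)" by (cases M) auto
  have det: "a*d - b*c = 1" using M Md by (simp add: SL2Z_def)
  have "(a+c, b+d, c, d) \<in> SL2Z" using det by (simp add: SL2Z_def algebra_simps)
  then obtain Y where Y: "\<And>z. Im z > Y \<Longrightarrow> cmod (f (mob (a+c, b+d, c, d) z)) < e" using assms e by blast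
  show "\<exists>Y. \<forall>z. Im z > Y \<longrightarrow> cmod (tr f (mob M z)) < e"
  proof (intro exI[of _ "max Y 0"] allI impI)
    fix z assume "Im z > max Y 0"
    then show "cmod (tr f (mob M z)) < e" using Y mob_tr[OF det, of z] by (simp add: tr_def Md)
  qed
qed

lemma cusp_rfl:
  assumes "\<forall>M\<in>SL2Z. \<forall>e>0. \<exists>Y. \<forall>z. Im z > Y \<longrightarrow> cmod (f (mob M z)) < e"
  shows "\<forall>M\<in>SL2Z. \<forall>e>0. \<exists>Y. \<forall>z. Im z > Y \<longrightarrow> cmod (rfl k f (mob M z)) < e"
proof (intro ballI allI impI)
  fix M :: "int \<times> int \<times> int \<times> int" and e :: real assume M: "M \<in> SL2Z" and e: "e > 0"
  obtain a b c d where Md: "M = (a,b,c,d)" by (cases M) auto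
  have det: "a*d - b*c = 1" using M Md by (simp add: SL2Z_def)
  have "(a - k*c, k*k*c + k*d - k*a - b, -c, k*c + d) \<in> SL2Z" using det by (simp add: SL2Z_def algebra_simps)
  then obtain Y where Y: "\<And>z. Im z > Y \<Longrightarrow> cmod (f (mob (a - k*c, k*k*c + k*d - k*a - b, -c, k*c + d) z)) < e"
    using assms e by blast
  show "\<exists>Y. \<forall>z. Im z > Y \<longrightarrow> cmod (rfl k f (mob M z)) < e"
  proof (intro exI[of _ "max Y 0"] allI impI)
    fix z assume z: "Im z > max Y 0"
    then have "Im (of_int k - cnj z) > Y" by simp
    then show "cmod (rfl k f (mob M z)) < e" using Y mob_rfl[OF det, of z k] z by (simp add: rfl_def Md)
  qed
qed



lemma meas_pres_shift: "distr lborel borel (\<lambda>z::complex. z + c) = lborel"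
proof -
  have "(\<lambda>z::complex. z + c) = (+) c" by (rule ext) (simp add: add.commute)
  then show ?thesis using lborel_distr_plus[of c] by simp
qed

lemma meas_pres_rfl: "distr lborel borel (\<lambda>z::complex. of_int k - cnj z) = lborel"
proof -
  define cc :: "complex \<Rightarrow> real" where "cc j = (if j = 1 then -1 else 1)" for j
  have "lborel = density (distr lborel borel (\<lambda>x. of_int k + (\<Sum>j\<in>Basis. (cc j * (x \<bullet> j)) *\<^sub>R j)))
      (\<lambda>_. (\<Prod>j\<in>Basis. \<bar>cc j\<bar>))"
    by (rule lborel_affine_euclidean) (simp add: cc_def)
  moreover have "(\<lambda>x::complex. of_int k + (\<Sum>j\<in>Basis. (cc j * (x \<bullet> j)) *\<^sub>R j)) = (\<lambda>z. of_int k - cnj z)"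
    by (auto simp: Basis_complex_def cc_def complex_eq_iff)
  moreover have "(\<Prod>j\<in>(Basis::complex set). \<bar>cc j\<bar>) = 1"
    by (auto simp: Basis_complex_def cc_def)
  ultimately show ?thesis by (simp add: density_1)
qed

lemma integral_bij:
  fixes \<phi> :: "complex \<Rightarrow> 'b::{banach, second_countable_topology}"
  assumes tm: "\<tau> \<in> borel_measurable borel" and sm: "\<sigma> \<in> borel_measurable borel"
    and inv: "\<And>x. \<tau> (\<sigma> x) = x" and d: "distr lborel borel \<tau> = lborel"
  shows "(integrable lborel (\<lambda>x. \<phi> (\<tau> x)) \<longleftrightarrow> integrable lborel \<phi>) \<and>
         integral\<^sup>L lborel (\<lambda>x. \<phi> (\<tau> x)) = integral\<^sup>L lborel \<phi>"
proof (cases "\<phi> \<in> borel_measurable borel")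
  case True
  have tm': "\<tau> \<in> measurable lborel borel" using tm by simp
  have "integrable (distr lborel borel \<tau>) \<phi> \<longleftrightarrow> integrable lborel (\<lambda>x. \<phi> (\<tau> x))"
    by (rule integrable_distr_eq[OF tm' True])
  moreover have "integral\<^sup>L (distr lborel borel \<tau>) \<phi> = integral\<^sup>L lborel (\<lambda>x. \<phi> (\<tau> x))"
    by (rule integral_distr[OF tm' True])
  ultimately show ?thesis using d by simp
next
  case False
  have nm: "(\<lambda>x. \<phi> (\<tau> x)) \<notin> borel_measurable borel"
  proof
    assume "(\<lambda>x. \<phi> (\<tau> x)) \<in> borel_measurable borel"
    then have "(\<lambda>x. (\<lambda>x. \<phi> (\<tau> x)) (\<sigma> x)) \<in> borel_measurable borel"
      using measurable_compose[OF sm] by blast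
    with False inv show False by simp
  qed
  have n1: "\<not> integrable lborel \<phi>"
    using False borel_measurable_integrable by fastforce
  have n2: "\<not> integrable lborel (\<lambda>x. \<phi> (\<tau> x))"
    using nm borel_measurable_integrable by fastforce
  show ?thesis using n1 n2 by (simp add: not_integrable_integral_eq)
qed

lemma integral_shift:
  fixes \<phi> :: "complex \<Rightarrow> 'b::{banach, second_countable_topology}"
  shows "(integrable lborel (\<lambda>x. \<phi> (x + c)) \<longleftrightarrow> integrable lborel \<phi>) \<and>
         integral\<^sup>L lborel (\<lambda>x. \<phi> (x + c)) = integral\<^sup>L lborel \<phi>"
  by (rule integral_bij[where \<sigma>="\<lambda>x. x - c"]) (auto simp: meas_pres_shift)

lemma integral_rfl:
  fixes \<phi> :: "complex \<Rightarrow> 'b::{banach, second_countable_topology}"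
  shows "(integrable lborel (\<lambda>x. \<phi> (of_int k - cnj x)) \<longleftrightarrow> integrable lborel \<phi>) \<and>
         integral\<^sup>L lborel (\<lambda>x. \<phi> (of_int k - cnj x)) = integral\<^sup>L lborel \<phi>"
  by (rule integral_bij[where \<sigma>="\<lambda>x. of_int k - cnj x"])
     (auto simp: meas_pres_rfl intro!: borel_measurable_continuous_onI continuous_intros)

lemma null_line: "{z::complex. Re z = c} \<in> null_sets lborel"
proof -
  have eq: "{z::complex. Re z = c} = (\<Union>n::nat. cbox (Complex c (- real n)) (Complex c (real n)))"
  proof (intro set_eqI iffI)
    fix z :: complex assume "z \<in> {z. Re z = c}"
    moreover obtain n :: nat where "\<bar>Im z\<bar> \<le> real n" using real_arch_simple by blast
    ultimately have "z \<in> cbox (Complex c (- real n)) (Complex c (real n))"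
      by (auto simp: cbox_def Basis_complex_def)
    then show "z \<in> (\<Union>n::nat. cbox (Complex c (- real n)) (Complex c (real n)))" by blast
  qed (auto simp: cbox_def Basis_complex_def)
  have "cbox (Complex c (- real n)) (Complex c (real n)) \<in> null_sets lborel" for n
    by (auto simp: null_sets_def emeasure_lborel_cbox_eq Basis_complex_def)
  then show ?thesis unfolding eq by (rule null_sets_UN)
qed

definition Sd :: "real \<Rightarrow> real \<Rightarrow> complex set" where
  "Sd a b = {z. Im z > 0 \<and> a \<le> Re z \<and> Re z \<le> b \<and> (\<forall>n::int. cmod (z - of_int n) \<ge> 1)}"

lemma F3_Sd: "F3 = Sd (-1/2) (5/2)" by (simp add: F3_def Sd_def)

lemma Sd_sets_borel[measurable]: "Sd a b \<in> sets borel"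
  unfolding Sd_def by measurable

lemma Sd_sets[measurable]: "Sd a b \<in> sets lborel"
  by simp

lemma F1_sets_borel[measurable]: "F1 \<in> sets borel"
  unfolding F1_def by measurable

lemma F1_sets[measurable]: "F1 \<in> sets lborel"
  by simp

lemma F3_sets[measurable]: "F3 \<in> sets lborel"
  by (simp add: F3_Sd)

lemma Sd_shift3: "z \<in> Sd (a+3) (b+3) \<longleftrightarrow> z + (-3) \<in> Sd a b"
proof -
  have "(\<forall>n::int. cmod (z - of_int n) \<ge> 1) \<longleftrightarrow> (\<forall>n::int. cmod (z + (-3) - of_int n) \<ge> 1)"
  proof
    assume h: "\<forall>n::int. cmod (z - of_int n) \<ge> 1"
    show "\<forall>n::int. cmod (z + (-3) - of_int n) \<ge> 1"
    proof
      fix n :: int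
      have "z + (-3) - of_int n = z - of_int (n + 3)" by simp
      then show "cmod (z + (-3) - of_int n) \<ge> 1" using h by metis
    qed
  next
    assume h: "\<forall>n::int. cmod (z + (-3) - of_int n) \<ge> 1"
    show "\<forall>n::int. cmod (z - of_int n) \<ge> 1"
    proof
      fix n :: int
      have "z - of_int n = z + (-3) - of_int (n - 3)" by simp
      then show "cmod (z - of_int n) \<ge> 1" using h by metis
    qed
  qed
  then show ?thesis by (auto simp: Sd_def)
qed

lemma set_int_shift3:
  fixes \<phi> :: "complex \<Rightarrow> 'b::{banach, second_countable_topology}"
  assumes per: "\<And>z. \<phi> (z + 3) = \<phi> z"
  shows "(set_integrable lborel (Sd (a+3) (b+3)) \<phi> \<longleftrightarrow> set_integrable lborel (Sd a b) \<phi>) \<and>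
         (LINT z:Sd (a+3) (b+3)|lborel. \<phi> z) = (LINT z:Sd a b|lborel. \<phi> z)"
proof -
  have e: "(\<lambda>z. indicator (Sd (a+3) (b+3)) z *\<^sub>R \<phi> z) = (\<lambda>z. (\<lambda>w. indicator (Sd a b) w *\<^sub>R \<phi> w) (z + (-3)))"
  proof
    fix z
    have "\<phi> z = \<phi> (z + (-3))" using per[of "z + (-3)"] by simp
    then show "indicator (Sd (a+3) (b+3)) z *\<^sub>R \<phi> z = indicator (Sd a b) (z + (-3)) *\<^sub>R \<phi> (z + (-3))"
      using Sd_shift3[of z a b] by (simp add: indicator_def)
  qed
  show ?thesis unfolding set_integrable_def set_lebesgue_integral_def e
    by (rule integral_shift)
qed

lemma AE_not_both:
  assumes "A \<inter> B \<subseteq> {z::complex. Re z = c}"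
  shows "AE x in lborel. \<not> (x \<in> A \<and> x \<in> B)"
  using AE_not_in[OF null_line[of c]] by eventually_elim (use assms in auto)

lemma periodic_F3:
  fixes \<phi> :: "complex \<Rightarrow> 'b::{banach, second_countable_topology}"
  assumes per: "\<And>z. \<phi> (z + 3) = \<phi> z"
  shows "(set_integrable lborel F3 \<phi> \<longleftrightarrow> set_integrable lborel (Sd (1/2) (7/2)) \<phi>) \<and>
         (LINT z:F3|lborel. \<phi> z) = (LINT z:Sd (1/2) (7/2)|lborel. \<phi> z)"
proof -
  define A where "A = Sd (-1/2) (1/2)"
  define B where "B = Sd (1/2) (5/2)"
  define C where "C = Sd (5/2) (7/2)"
  have F3e: "F3 = A \<union> B" by (auto simp: F3_Sd A_def B_def Sd_def)
  have Fpe: "Sd (1/2) (7/2) = B \<union> C" by (auto simp: C_def B_def Sd_def)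
  have CA: "(set_integrable lborel C \<phi> \<longleftrightarrow> set_integrable lborel A \<phi>) \<and>
         (LINT z:C|lborel. \<phi> z) = (LINT z:A|lborel. \<phi> z)"
    using set_int_shift3[of \<phi> "-1/2" "1/2", OF per] by (simp add: A_def C_def)
  have mA[measurable]: "A \<in> sets borel" and mB[measurable]: "B \<in> sets borel" and mC[measurable]: "C \<in> sets borel"
    by (simp_all add: A_def B_def C_def)
  have AB: "AE x in lborel. \<not> (x \<in> A \<and> x \<in> B)"
    by (rule AE_not_both[of _ _ "1/2"]) (auto simp: A_def B_def Sd_def)
  have BC: "AE x in lborel. \<not> (x \<in> B \<and> x \<in> C)"
    by (rule AE_not_both[of _ _ "5/2"]) (auto simp: C_def B_def Sd_def)
  have i1: "set_integrable lborel F3 \<phi> \<longleftrightarrow> set_integrable lborel (Sd (1/2) (7/2)) \<phi>"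
  proof
    assume h: "set_integrable lborel F3 \<phi>"
    have "set_integrable lborel A \<phi>" by (rule set_integrable_subset[OF h]) (use F3e mA in auto)
    moreover have "set_integrable lborel B \<phi>" by (rule set_integrable_subset[OF h]) (use F3e mB in auto)
    ultimately
    show "set_integrable lborel (Sd (1/2) (7/2)) \<phi>"
      unfolding Fpe using CA by (intro set_integrable_Un) auto
  next
    assume h: "set_integrable lborel (Sd (1/2) (7/2)) \<phi>"
    have "set_integrable lborel B \<phi>" by (rule set_integrable_subset[OF h]) (use Fpe mB in auto)
    moreover have "set_integrable lborel C \<phi>" by (rule set_integrable_subset[OF h]) (use Fpe mC in auto)
    ultimately show "set_integrable lborel F3 \<phi>"
      unfolding F3e using CA by (intro set_integrable_Un) auto
  qed
  have i2: "(LINT z:F3|lborel. \<phi> z) = (LINT z:Sd (1/2) (7/2)|lborel. \<phi> z)"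
  proof (cases "set_integrable lborel F3 \<phi>")
    case True
    have iA: "set_integrable lborel A \<phi>" by (rule set_integrable_subset[OF True]) (use F3e mA in auto)
    have iB: "set_integrable lborel B \<phi>" by (rule set_integrable_subset[OF True]) (use F3e mB in auto)
    have iC: "set_integrable lborel C \<phi>" using CA iA by auto
    have "(LINT z:F3|lborel. \<phi> z) = (LINT z:A|lborel. \<phi> z) + (LINT z:B|lborel. \<phi> z)"
      unfolding F3e by (rule set_integral_Un_AE[OF AB _ _ iA iB]) simp_all
    moreover have "(LINT z:Sd (1/2) (7/2)|lborel. \<phi> z) = (LINT z:B|lborel. \<phi> z) + (LINT z:C|lborel. \<phi> z)"
      unfolding Fpe by (rule set_integral_Un_AE[OF BC _ _ iB iC]) simp_all
    ultimately show ?thesis using CA by (simp add: add.commute)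
  next
    case False
    then have "\<not> set_integrable lborel (Sd (1/2) (7/2)) \<phi>" using i1 by simp
    with False show ?thesis
      by (simp add: set_integrable_def set_lebesgue_integral_def not_integrable_integral_eq)
  qed
  from i1 i2 show ?thesis by simp
qed



lemma pow_le_frac:
  fixes d \<rho> :: real
  assumes "0 \<le> d" "d \<le> \<rho>" "0 < \<rho>" "n \<ge> 1"
  shows "d ^ n \<le> (d / \<rho>) * \<rho> ^ n"
proof -
  obtain m where n: "n = Suc m" using assms(4) by (cases n) auto
  have "d ^ m \<le> \<rho> ^ m" using assms by (intro power_mono) auto
  then have "d * d ^ m \<le> d * \<rho> ^ m" using assms by (intro mult_left_mono) auto
  moreover have "(d / \<rho>) * \<rho> ^ Suc m = d * \<rho> ^ m" using assms by (simp add: field_simps)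
  ultimately show ?thesis using n by simp
qed

lemma RA_cont:
  assumes ra: "real_analytic_UHP f" and z0: "z0 \<in> UHP"
  shows "continuous (at z0) f"
proof -
  obtain r c where r: "r > 0" and hs: "\<And>z. z \<in> ball z0 r \<Longrightarrow>
      ((\<lambda>(j,l). c (j,l) * of_real ((Re z - Re z0) ^ j * (Im z - Im z0) ^ l)) has_sum f z) UNIV"
    using ra z0 unfolding real_analytic_UHP_def by blast
  define \<rho> where "\<rho> = r / 4"
  have \<rho>: "\<rho> > 0" using r by (simp add: \<rho>_def)
  define p where "p = z0 + Complex \<rho> \<rho>"
  have "cmod (Complex \<rho> \<rho>) \<le> \<bar>\<rho>\<bar> + \<bar>\<rho>\<bar>" using cmod_le[of "Complex \<rho> \<rho>"] by simp
  then have "p \<in> ball z0 r" using \<rho> r by (simp add: p_def dist_norm \<rho>_def)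
  from hs[OF this] have "((\<lambda>(j,l). c (j,l) * of_real (\<rho> ^ j * \<rho> ^ l)) has_sum f p) UNIV"
    by (simp add: p_def)
  then have "(\<lambda>(j,l). c (j,l) * of_real (\<rho> ^ j * \<rho> ^ l)) summable_on UNIV" by (rule has_sum_imp_summable)
  then have "(\<lambda>x. norm ((\<lambda>(j,l). c (j,l) * of_real (\<rho> ^ j * \<rho> ^ l)) x)) summable_on UNIV"
    using summable_on_iff_abs_summable_on_complex by blast
  moreover define N where "N = (\<lambda>(j,l). cmod (c (j,l)) * \<rho> ^ (j + l))"
  moreover have "(\<lambda>x. norm ((\<lambda>(j,l). c (j,l) * of_real (\<rho> ^ j * \<rho> ^ l)) x)) = N"
    using \<rho> by (intro ext) (auto simp: N_def norm_mult power_add abs_mult norm_power split: prod.split)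
  ultimately have Ns: "N summable_on UNIV" by simp
  define B where "B = infsum N UNIV"
  have NB: "(N has_sum B) UNIV" using Ns by (simp add: B_def)
  have Bnn: "B \<ge> 0" unfolding B_def by (rule infsum_nonneg) (use \<rho> in \<open>auto simp: N_def\<close>)
  have hz0: "((\<lambda>(j,l). c (j,l) * of_real ((0::real) ^ j * 0 ^ l)) has_sum f z0) UNIV"
    using hs[of z0] r by simp
  have main: "cmod (f w - f z0) \<le> (cmod (w - z0) / \<rho>) * B" if w: "cmod (w - z0) \<le> \<rho>" for w
  proof -
    define d where "d = cmod (w - z0)"
    have d: "0 \<le> d" "d \<le> \<rho>" using w by (auto simp: d_def)
    have "w \<in> ball z0 r" using w \<rho> r by (simp add: dist_norm \<rho>_def norm_minus_commute)
    from has_sum_add[OF hs[OF this] has_sum_uminusI[OF hz0]]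
    have hd: "((\<lambda>x. (\<lambda>(j,l). c (j,l) * of_real ((Re w - Re z0) ^ j * (Im w - Im z0) ^ l)) x
          - (\<lambda>(j,l). c (j,l) * of_real ((0::real) ^ j * 0 ^ l)) x) has_sum (f w - f z0)) UNIV"
      by simp
    have NB': "((\<lambda>x. (d / \<rho>) * N x) has_sum ((d / \<rho>) * B)) UNIV"
      by (rule has_sum_cmult_right[OF NB])
    have bound: "norm ((\<lambda>(j,l). c (j,l) * of_real ((Re w - Re z0) ^ j * (Im w - Im z0) ^ l)) x
          - (\<lambda>(j,l). c (j,l) * of_real ((0::real) ^ j * 0 ^ l)) x) \<le> (d / \<rho>) * N x" for x
    proof -
      obtain j l where x: "x = (j,l)" by (cases x) auto
      show ?thesis
      proof (cases "j = 0 \<and> l = 0")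
        case True
        then show ?thesis using x d \<rho> by (simp add: N_def)
      next
        case False
        have hx: "\<bar>Re w - Re z0\<bar> \<le> d" using abs_Re_le_cmod[of "w - z0"] by (simp add: d_def)
        have hy: "\<bar>Im w - Im z0\<bar> \<le> d" using abs_Im_le_cmod[of "w - z0"] by (simp add: d_def)
        have "\<bar>(Re w - Re z0) ^ j * (Im w - Im z0) ^ l\<bar> \<le> d ^ j * d ^ l"
          unfolding abs_mult power_abs using hx hy by (intro mult_mono power_mono) auto
        also have "\<dots> = d ^ (j + l)" by (simp add: power_add)
        also have "\<dots> \<le> (d / \<rho>) * \<rho> ^ (j + l)" using False d \<rho> by (intro pow_le_frac) auto
        finally have e: "\<bar>(Re w - Re z0) ^ j * (Im w - Im z0) ^ l\<bar> \<le> (d / \<rho>) * \<rho> ^ (j + l)" .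
        have z: "(0::real) ^ j * 0 ^ l = 0" using False by auto
        have eq: "(\<lambda>(j,l). c (j,l) * of_real ((Re w - Re z0) ^ j * (Im w - Im z0) ^ l)) x
          - (\<lambda>(j,l). c (j,l) * of_real ((0::real) ^ j * 0 ^ l)) x
          = c (j,l) * of_real ((Re w - Re z0) ^ j * (Im w - Im z0) ^ l)"
          unfolding x by (simp only: prod.case z of_real_0 mult_zero_right diff_zero)
        have "norm (c (j,l) * of_real ((Re w - Re z0) ^ j * (Im w - Im z0) ^ l))
            = cmod (c (j,l)) * \<bar>(Re w - Re z0) ^ j * (Im w - Im z0) ^ l\<bar>"
          by (simp only: norm_mult norm_of_real)
        also have "\<dots> \<le> cmod (c (j,l)) * ((d / \<rho>) * \<rho> ^ (j + l))"
          using e by (intro mult_left_mono) auto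
        also have "\<dots> = (d / \<rho>) * N x" by (simp add: N_def x)
        finally show ?thesis unfolding eq .
      qed
    qed
    have "norm (f w - f z0) \<le> (d / \<rho>) * B"
      by (rule norm_infsum_le[OF hd NB']) (use bound in auto)
    then show ?thesis by (simp add: d_def)
  qed
  show ?thesis
    unfolding continuous_at_eps_delta
  proof (intro allI impI)
    fix e :: real assume e: "e > 0"
    define \<delta> where "\<delta> = min \<rho> (e * \<rho> / (B + 1))"
    have \<delta>: "\<delta> > 0" using e \<rho> Bnn by (simp add: \<delta>_def)
    show "\<exists>\<delta>>0. \<forall>x'. dist x' z0 < \<delta> \<longrightarrow> dist (f x') (f z0) < e"
    proof (intro exI[of _ \<delta>] conjI allI impI)
      fix w assume "dist w z0 < \<delta>"
      then have wd: "cmod (w - z0) < \<delta>" by (simp add: dist_norm)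
      then have "cmod (w - z0) \<le> \<rho>" by (simp add: \<delta>_def)
      from main[OF this] have m: "cmod (f w - f z0) \<le> (cmod (w - z0) / \<rho>) * B" .
      have "(cmod (w - z0) / \<rho>) * B \<le> (cmod (w - z0) / \<rho>) * (B + 1)"
        using \<rho> by (intro mult_left_mono) auto
      also have "\<dots> < ((e * \<rho> / (B + 1)) / \<rho>) * (B + 1)"
        using wd \<rho> Bnn by (intro mult_strict_right_mono divide_strict_right_mono) (auto simp: \<delta>_def)
      also have "\<dots> = e"
      proof -
        have "B + 1 \<noteq> 0" using Bnn by simp
        then show ?thesis using \<rho> by simp
      qed
      finally show "dist (f w) (f z0) < e" using m by (simp add: dist_norm)
    qed (rule \<delta>)
  qed
qed



lemma reduce:
  assumes zp: "Im z > 0"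
  shows "\<exists>M\<in>SL2Z. mob M z \<in> F1"
proof -
  define S where "S = {(p,q). (\<exists>u v. u * p + v * q = (1::int)) \<and> cmod (of_int p * z + of_int q) \<le> 1}"
  define K where "K = 1/Im z + 1 + \<bar>Re z\<bar>/Im z"
  define N where "N = nat (ceiling K)"
  have KN: "K \<le> real N" unfolding N_def by linarith
  have bnd: "\<bar>real_of_int p\<bar> \<le> K \<and> \<bar>real_of_int q\<bar> \<le> K" if "(p,q) \<in> S" for p q
  proof -
    have le1: "cmod (of_int p * z + of_int q) \<le> 1" using that by (simp add: S_def)
    have "\<bar>Im (of_int p * z + of_int q)\<bar> \<le> 1" using abs_Im_le_cmod le1 by (rule order_trans)
    then have "\<bar>real_of_int p\<bar> * Im z \<le> 1" using zp by (simp add: abs_mult)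
    then have hp: "\<bar>real_of_int p\<bar> \<le> 1 / Im z" using zp by (simp add: field_simps)
    have "\<bar>Re (of_int p * z + of_int q)\<bar> \<le> 1" using abs_Re_le_cmod le1 by (rule order_trans)
    then have hq0: "\<bar>real_of_int p * Re z + real_of_int q\<bar> \<le> 1" by simp
    have "\<bar>real_of_int q\<bar> \<le> \<bar>real_of_int p * Re z + real_of_int q\<bar> + \<bar>real_of_int p\<bar> * \<bar>Re z\<bar>"
      by (metis abs_mult abs_triangle_ineq4 add_diff_cancel_left' add.commute)
    also have "\<dots> \<le> 1 + (1 / Im z) * \<bar>Re z\<bar>"
      using hq0 hp by (intro add_mono mult_right_mono) auto
    finally have hq: "\<bar>real_of_int q\<bar> \<le> 1 + \<bar>Re z\<bar> / Im z" by simp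
    have A: "1 / Im z \<ge> 0" and B: "\<bar>Re z\<bar> / Im z \<ge> 0" using zp by auto
    show ?thesis using hp hq A B unfolding K_def by linarith
  qed
  have finS: "finite S"
  proof (rule finite_subset)
    show "S \<subseteq> {- int N..int N} \<times> {- int N..int N}"
    proof
      fix x assume "x \<in> S"
      then obtain p q where x: "x = (p,q)" and pq: "(p,q) \<in> S" by (cases x) auto
      from bnd[OF pq] KN have "\<bar>real_of_int p\<bar> \<le> real N" "\<bar>real_of_int q\<bar> \<le> real N" by auto
      then have "\<bar>p\<bar> \<le> int N" "\<bar>q\<bar> \<le> int N" by linarith+
      then show "x \<in> {- int N..int N} \<times> {- int N..int N}" using x by auto
    qed
  qed auto
  have S01: "(0,1) \<in> S" by (auto simp: S_def intro: exI[of _ 0] exI[of _ 1])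
  define V where "V = (\<lambda>(p,q). cmod (of_int p * z + of_int q)) ` S"
  have finV: "finite V" "V \<noteq> {}" using finS S01 by (auto simp: V_def)
  define m where "m = Min V"
  have "m \<in> V" using finV by (simp add: m_def)
  then obtain c d where cdS: "(c,d) \<in> S" and mcd: "m = cmod (of_int c * z + of_int d)"
    by (auto simp: V_def)
  have mmin: "m \<le> cmod (of_int p * z + of_int q)" if "(p,q) \<in> S" for p q
    using that finV by (auto simp: m_def V_def intro!: Min_le)
  obtain u v where uv: "u * c + v * d = 1" using cdS by (auto simp: S_def)
  define a where "a = v"
  define b where "b = -u"
  have det: "a * d - b * c = 1" using uv by (simp add: a_def b_def algebra_simps)
  define w where "w = mob (a,b,c,d) z"
  define n where "n = round (Re w)"
  define M' where "M' = (a - n * c, b - n * d, c, d)"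
  have det': "(a - n * c) * d - (b - n * d) * c = 1" using det by (simp add: algebra_simps)
  have M'S: "M' \<in> SL2Z" using det' by (simp add: M'_def SL2Z_def)
  have den: "of_int c * z + of_int d \<noteq> 0" using denom_nz[OF det zp] .
  have wM: "mob M' z = w - of_int n"
    using den by (simp add: M'_def w_def mob_simp field_simps)
  have "mob M' z \<in> UHP" using mob_UHP[OF M'S] zp by (simp add: UHP_def)
  then have im: "Im (mob M' z) > 0" by (simp add: UHP_def)
  have re: "\<bar>Re (mob M' z)\<bar> \<le> 1/2"
    using of_int_round_abs_le[of "Re w"] by (simp add: wM n_def abs_minus_commute)
  have cmp: "cmod (of_int (a - n * c) * z + of_int (b - n * d)) \<ge> cmod (of_int c * z + of_int d)"
  proof (cases "cmod (of_int (a - n * c) * z + of_int (b - n * d)) \<le> 1")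
    case True
    have "d * (a - n * c) + (-c) * (b - n * d) = 1" using det by (simp add: algebra_simps)
    then have "\<exists>u v. u * (a - n * c) + v * (b - n * d) = 1" by (intro exI[of _ d] exI[of _ "-c"]) simp
    then have "(a - n * c, b - n * d) \<in> S" using True by (simp add: S_def)
    from mmin[OF this] mcd show ?thesis by simp
  next
    case False
    have "cmod (of_int c * z + of_int d) \<le> 1" using cdS by (simp add: S_def)
    with False show ?thesis by simp
  qed
  have "cmod (mob M' z) = cmod (of_int (a - n * c) * z + of_int (b - n * d)) / cmod (of_int c * z + of_int d)"
    by (simp add: M'_def mob_simp norm_divide)
  also have "\<dots> \<ge> 1" using cmp den by simp
  finally have "cmod (mob M' z) \<ge> 1" .
  moreover have "-1/2 \<le> Re (mob M' z)" "Re (mob M' z) \<le> 1/2" using re by linarith+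
  ultimately have "mob M' z \<in> F1" using im by (simp add: F1_def)
  then show ?thesis using M'S by blast
qed

lemma dist_int_ge1:
  assumes re: "\<bar>Re z\<bar> \<le> 1/2" and nz: "cmod z \<ge> 1"
  shows "cmod (z - of_int n) \<ge> 1"
proof (cases "n = 0")
  case True then show ?thesis using nz by simp
next
  case False
  then have "\<bar>real_of_int n\<bar> \<ge> 1" by linarith
  then have "\<bar>Re z - real_of_int n\<bar> \<ge> 1/2" using re by linarith
  then have a: "(Re z - real_of_int n)^2 \<ge> (1/2)^2"
    by (metis abs_le_square_iff abs_of_nonneg zero_le_divide_iff zero_le_one zero_le_numeral)
  have "(Re z)^2 \<le> (1/2)^2" using re by (metis abs_le_square_iff abs_of_nonneg zero_le_divide_iff zero_le_one zero_le_numeral)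
  moreover have "(cmod z)^2 \<ge> 1" using nz by (metis one_le_power)
  ultimately have b: "(Im z)^2 \<ge> 3/4" using cmod_power2[of z] by (simp add: power_divide)
  have "(cmod (z - of_int n))^2 = (Re z - real_of_int n)^2 + (Im z)^2" by (simp add: cmod_power2)
  also have "\<dots> \<ge> 1" using a b by (simp add: power_divide)
  finally have "1^2 \<le> (cmod (z - of_int n))^2" by simp
  then show ?thesis by (rule power2_le_imp_le) simp
qed

lemma F1_sub_F3: "F1 \<subseteq> F3"
proof
  fix z assume z: "z \<in> F1"
  then have re: "\<bar>Re z\<bar> \<le> 1/2" and nz: "cmod z \<ge> 1" by (auto simp: F1_def)
  then show "z \<in> F3" using z dist_int_ge1[OF re nz] by (auto simp: F1_def F3_def)
qed

definition Oset :: "complex set" where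
  "Oset = {w. 0 < Im w \<and> -1/2 < Re w \<and> Re w < 1/2 \<and> 1 < cmod w}"

lemma Oset_open: "open Oset"
proof -
  have e: "Oset = {w. 0 < Im w} \<inter> {w. -1/2 < Re w} \<inter> {w. Re w < 1/2} \<inter> {w. 1 < cmod w}"
    by (auto simp: Oset_def)
  show ?thesis unfolding e
    by (intro open_Int open_Collect_less continuous_intros)
qed

lemma Oset_sub_F3: "Oset \<subseteq> F3"
proof
  fix z assume z: "z \<in> Oset"
  then have re: "\<bar>Re z\<bar> \<le> 1/2" and nz: "cmod z \<ge> 1" by (auto simp: Oset_def)
  then show "z \<in> F3" using z dist_int_ge1[OF re nz] by (auto simp: Oset_def F3_def)
qed

lemma F1_approx:
  assumes z: "z \<in> F1" and e: "e > 0"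
  shows "\<exists>z'\<in>Oset. dist z' z < e"
proof -
  define x where "x = Re z"
  define y where "y = Im z"
  have y: "y > 0" and x: "\<bar>x\<bar> \<le> 1/2" and nz: "x^2 + y^2 \<ge> 1"
    using z by (auto simp: F1_def x_def y_def cmod_power2[symmetric] intro: one_le_power)
  have x2: "x^2 \<le> 1/4"
  proof -
    have "x^2 = \<bar>x\<bar> * \<bar>x\<bar>" by (simp add: power2_eq_square abs_mult_self_eq)
    also have "\<dots> \<le> (1/2) * (1/2)" using x by (intro mult_mono) auto
    finally show ?thesis by simp
  qed
  define t where "t = min (1/2) (e / (2 * (cmod z + 1)))"
  have "e / (2 * (cmod z + 1)) > 0" using e by (intro divide_pos_pos) (auto intro: add_nonneg_pos)
  then have t0: "t > 0" unfolding t_def by auto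
  have t1: "t \<le> 1/2" unfolding t_def by (rule min.cobounded1)
  note t = t0 t1
  define z' where "z' = Complex (x * (1 - t)) (y * (1 + t))"
  have "z' - z = of_real t * Complex (- x) y" by (simp add: z'_def complex_eq_iff x_def y_def algebra_simps)
  moreover have "cmod (Complex (- x) y) = cmod z" by (simp add: cmod_def x_def y_def)
  ultimately have "dist z' z = t * cmod z"
    using t by (simp add: dist_norm norm_mult)
  also have "\<dots> \<le> (e / (2 * (cmod z + 1))) * cmod z" using t by (intro mult_right_mono) (auto simp: t_def)
  also have "\<dots> < e"
  proof -
    have q0: "e / (2 * (cmod z + 1)) \<ge> 0" using e by simp
    have "(e / (2 * (cmod z + 1))) * cmod z \<le> (e / (2 * (cmod z + 1))) * (cmod z + 1)"
      using q0 by (intro mult_left_mono) auto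
    also have "\<dots> = e / 2"
    proof -
      have "cmod z + 1 \<noteq> 0" by (metis add_nonneg_pos norm_ge_zero zero_less_one less_irrefl)
      then show ?thesis by (simp add: field_simps)
    qed
    finally have "(e / (2 * (cmod z + 1))) * cmod z \<le> e / 2" .
    then show ?thesis using e by linarith
  qed
  finally have d: "dist z' z < e" .
  have im: "0 < Im z'" using y t by (simp add: z'_def)
  have "\<bar>x * (1 - t)\<bar> = \<bar>x\<bar> * (1 - t)" using t by (simp add: abs_mult)
  also have "\<dots> \<le> 1/2 * (1 - t)" using x t by (intro mult_right_mono) auto
  also have "\<dots> < 1/2" using t by simp
  finally have re: "\<bar>Re z'\<bar> < 1/2" by (simp add: z'_def)
  have "(cmod z')^2 = x^2 * (1-t)^2 + y^2 * (1+t)^2" by (simp add: z'_def cmod_power2 power_mult_distrib)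
  also have "\<dots> \<ge> x^2 * (1-t)^2 + (1 - x^2) * (1+t)^2"
    using nz by (intro add_left_mono mult_right_mono) auto
  also have "x^2 * (1-t)^2 + (1 - x^2) * (1+t)^2 = (1+t)^2 - 4 * t * x^2" by (simp add: power2_eq_square algebra_simps)
  also have "\<dots> \<ge> (1+t)^2 - t" using x2 t by (simp add: mult_left_mono)
  finally have h1: "(cmod z')^2 \<ge> 1 + t + t^2" by (simp add: power2_eq_square algebra_simps)
  have h2: "t^2 \<ge> 0" by simp
  have "(cmod z')^2 > 1" using h1 h2 t by linarith
  then have "(cmod z')^2 > 1^2" by simp
  then have "cmod z' > 1" by (rule power_less_imp_less_base) simp
  then have "z' \<in> Oset" using im re by (auto simp: Oset_def)
  with d show ?thesis by blast
qed



lemma Maass_iff: "f \<in> Maass G F R \<longleftrightarrow>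
     (\<forall>z. z \<notin> UHP \<longrightarrow> f z = 0) \<and>
     real_analytic_UHP f \<and>
     (\<forall>M\<in>G. \<forall>z\<in>UHP. f (mob M z) = f z) \<and>
     (\<forall>z\<in>UHP. - ((Im z)^2) * (dxx f z + dyy f z) = of_real (1/4 + R^2) * f z) \<and>
     (\<forall>M\<in>SL2Z. \<forall>e>0. \<exists>Y. \<forall>z. Im z > Y \<longrightarrow> cmod (f (mob M z)) < e) \<and>
     set_integrable lborel F (\<lambda>z. (cmod (f z))^2 / (Im z)^2)"
  unfolding Maass_def by simp

lemma zero_on_F1:
  assumes f: "f \<in> Maass_Gamma3 R" and pp: "petersson3 f f = 0"
  shows "\<forall>z\<in>F1. f z = 0"
proof
  fix z assume zF1: "z \<in> F1"
  have ra: "real_analytic_UHP f" and int: "set_integrable lborel F3 (\<lambda>z. (cmod (f z))^2 / (Im z)^2)"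
    using f by (auto simp: Maass_Gamma3_def Maass_iff)
  define \<psi> where "\<psi> z = indicator F3 z * ((cmod (f z))^2 / (Im z)^2)" for z
  have i\<psi>: "integrable lborel \<psi>" using int unfolding set_integrable_def \<psi>_def[abs_def] by simp
  have pw: "indicator F3 w *\<^sub>R (f w * cnj (f w) / complex_of_real ((Im w)^2)) = complex_of_real (\<psi> w)" for w
    by (simp add: \<psi>_def complex_norm_square[symmetric] scaleR_conv_of_real)
  have "petersson3 f f = integral\<^sup>L lborel (\<lambda>w. complex_of_real (\<psi> w))"
    unfolding petersson3_def set_lebesgue_integral_def pw ..
  also have "\<dots> = complex_of_real (integral\<^sup>L lborel \<psi>)" by simp
  finally have "integral\<^sup>L lborel \<psi> = 0" using pp by simp
  then have AE: "AE w in lborel. \<psi> w = 0"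
    using integral_nonneg_eq_0_iff_AE[OF i\<psi>] by (simp add: \<psi>_def)
  show "f z = 0"
  proof (rule ccontr)
    assume fz: "f z \<noteq> 0"
    have zU: "z \<in> UHP" using zF1 by (simp add: F1_def UHP_def)
    from RA_cont[OF ra zU] obtain \<delta> where \<delta>: "\<delta> > 0"
        and h\<delta>: "\<And>w. dist w z < \<delta> \<Longrightarrow> dist (f w) (f z) < cmod (f z)"
      unfolding continuous_at_eps_delta using fz by (metis zero_less_norm_iff)
    have nz: "f w \<noteq> 0" if "dist w z < \<delta>" for w
      using h\<delta>[OF that] by (auto simp: dist_norm)
    obtain z' where z': "z' \<in> Oset" "dist z' z < \<delta>/2" using F1_approx[OF zF1, of "\<delta>/2"] \<delta> by auto
    obtain \<epsilon> where \<epsilon>: "\<epsilon> > 0" "ball z' \<epsilon> \<subseteq> Oset"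
      using Oset_open z'(1) open_contains_ball by blast
    define \<epsilon>' where "\<epsilon>' = min \<epsilon> (\<delta>/2)"
    have \<epsilon>': "\<epsilon>' > 0" using \<epsilon> \<delta> by (simp add: \<epsilon>'_def)
    have inball: "\<psi> w \<noteq> 0" if w: "w \<in> ball z' \<epsilon>'" for w
    proof -
      have "w \<in> Oset" using w \<epsilon> by (auto simp: \<epsilon>'_def)
      then have wF3: "w \<in> F3" and imw: "Im w > 0" using Oset_sub_F3 by (auto simp: Oset_def)
      have "dist w z \<le> dist w z' + dist z' z" by (rule dist_triangle)
      also have "\<dots> < \<delta>" using w z'(2) by (simp add: \<epsilon>'_def dist_commute)
      finally have "f w \<noteq> 0" by (rule nz)
      then show ?thesis using wF3 imw by (simp add: \<psi>_def)
    qed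
    from AE obtain N where N: "{x \<in> space lborel. \<not> \<psi> x = 0} \<subseteq> N" "emeasure lborel N = 0" "N \<in> sets lborel"
      by (rule AE_E)
    have "ball z' \<epsilon>' \<subseteq> N" using N(1) inball by auto
    then have "emeasure lborel (ball z' \<epsilon>') \<le> emeasure lborel N" using N(3) by (intro emeasure_mono)
    then have "emeasure lborel (ball z' \<epsilon>') = 0" using N(2) by simp
    then have "measure lborel (ball z' \<epsilon>') = 0" by (simp add: measure_def)
    with content_ball_pos[OF \<epsilon>'] show False by simp
  qed
qed

lemma SL2_inv:
  assumes G: "\<forall>M\<in>Gamma3. \<forall>z\<in>UHP. f (mob M z) = f z" and T: "\<forall>z. f (z + 1) = f z"
  shows "\<forall>M\<in>SL2Z. \<forall>z\<in>UHP. f (mob M z) = f z"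
proof (intro ballI)
  fix M z assume M: "M \<in> SL2Z" and z: "z \<in> UHP"
  obtain a b c d where Md: "M = (a,b,c,d)" by (cases M) auto
  have det: "a * d - b * c = 1" using M Md by (simp add: SL2Z_def)
  obtain k where k: "k \<in> {0,1,2}" and N: "(a, b - k * a, c, d - k * c) \<in> Gamma3" using coset3[OF det] by blast
  have e: "mob M z = mob (a, b - k * a, c, d - k * c) (z + of_int k)"
    by (simp add: Md mob_simp algebra_simps)
  have zk: "z + of_int k \<in> UHP" using z by (simp add: UHP_def)
  have "f (mob M z) = f (z + of_int k)" using G N zk e by simp
  also have "\<dots> = f z"
  proof -
    have "f (z + 2) = f z" using T[rule_format, of "z+1"] T[rule_format, of z] by (simp add: add.assoc)
    then show ?thesis using k T by auto
  qed
  finally show "f (mob M z) = f z" .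
qed

lemma Tinv_zero:
  assumes fn: "f \<in> Maass_new3 R" and T: "\<forall>z. f (z + 1) = f z"
  shows "f = (\<lambda>z. 0)"
proof -
  have f3: "f \<in> Maass_Gamma3 R" using fn by (simp add: Maass_new3_def)
  then have c: "(\<forall>z. z \<notin> UHP \<longrightarrow> f z = 0)" "real_analytic_UHP f"
     "(\<forall>M\<in>Gamma3. \<forall>z\<in>UHP. f (mob M z) = f z)"
     "(\<forall>z\<in>UHP. - ((Im z)^2) * (dxx f z + dyy f z) = of_real (1/4 + R^2) * f z)"
     "(\<forall>M\<in>SL2Z. \<forall>e>0. \<exists>Y. \<forall>z. Im z > Y \<longrightarrow> cmod (f (mob M z)) < e)"
     "set_integrable lborel F3 (\<lambda>z. (cmod (f z))^2 / (Im z)^2)"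
    by (simp_all add: Maass_Gamma3_def Maass_iff)
  have inv: "\<forall>M\<in>SL2Z. \<forall>z\<in>UHP. f (mob M z) = f z" by (rule SL2_inv[OF c(3) T])
  have "set_integrable lborel F1 (\<lambda>z. (cmod (f z))^2 / (Im z)^2)"
    by (rule set_integrable_subset[OF c(6)]) (use F1_sub_F3 in auto)
  then have "f \<in> Maass_full R" using c inv by (simp add: Maass_full_def Maass_iff)
  then have "petersson3 f f = 0" using fn by (simp add: Maass_new3_def)
  from zero_on_F1[OF f3 this] have z1: "\<forall>z\<in>F1. f z = 0" .
  show ?thesis
  proof
    fix z
    show "f z = 0"
    proof (cases "z \<in> UHP")
      case True
      have "\<exists>M\<in>SL2Z. mob M z \<in> F1" using reduce True by (simp add: UHP_def)
      then obtain M where "M \<in> SL2Z" "mob M z \<in> F1" by blast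
      then show ?thesis using inv True z1 by metis
    next
      case False then show ?thesis using c(1) by simp
    qed
  qed
qed



lemma per3:
  assumes "f \<in> Maass_Gamma3 R"
  shows "f (z + 3) = f z"
proof -
  have G: "\<forall>M\<in>Gamma3. \<forall>z\<in>UHP. f (mob M z) = f z" and Z: "\<forall>z. z \<notin> UHP \<longrightarrow> f z = 0"
    using assms by (simp_all add: Maass_Gamma3_def Maass_iff)
  have M: "(1,3,0,1) \<in> Gamma3" by (simp add: Gamma3_def)
  show ?thesis
  proof (cases "z \<in> UHP")
    case True
    then have "f (mob (1,3,0,1) z) = f z" using G M by blast
    then show ?thesis by (simp add: mob_simp)
  next
    case False
    then have "z + 3 \<notin> UHP" by (simp add: UHP_def)
    then show ?thesis using False Z by simp
  qed
qed

lemma Tinv_full: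
  assumes "g \<in> Maass_full R"
  shows "g (z + 1) = g z"
proof -
  have G: "\<forall>M\<in>SL2Z. \<forall>z\<in>UHP. g (mob M z) = g z" and Z: "\<forall>z. z \<notin> UHP \<longrightarrow> g z = 0"
    using assms by (simp_all add: Maass_full_def Maass_iff)
  have M: "(1,1,0,1) \<in> SL2Z" by (simp add: SL2Z_def)
  show ?thesis
  proof (cases "z \<in> UHP")
    case True
    then have "g (mob (1,1,0,1) z) = g z" using G M by blast
    then show ?thesis by (simp add: mob_simp)
  next
    case False
    then have "z + 1 \<notin> UHP" by (simp add: UHP_def)
    then show ?thesis using False Z by simp
  qed
qed

lemma F3_shift1: "z \<in> F3 \<longleftrightarrow> z + 1 \<in> Sd (1/2) (7/2)"
proof -
  have "(\<forall>n::int. cmod (z - of_int n) \<ge> 1) \<longleftrightarrow> (\<forall>n::int. cmod (z + 1 - of_int n) \<ge> 1)"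
  proof
    assume h: "\<forall>n::int. cmod (z - of_int n) \<ge> 1"
    show "\<forall>n::int. cmod (z + 1 - of_int n) \<ge> 1"
    proof
      fix n :: int
      have "z + 1 - of_int n = z - of_int (n - 1)" by simp
      then show "cmod (z + 1 - of_int n) \<ge> 1" using h by metis
    qed
  next
    assume h: "\<forall>n::int. cmod (z + 1 - of_int n) \<ge> 1"
    show "\<forall>n::int. cmod (z - of_int n) \<ge> 1"
    proof
      fix n :: int
      have "z - of_int n = z + 1 - of_int (n + 1)" by simp
      then show "cmod (z - of_int n) \<ge> 1" using h by metis
    qed
  qed
  then show ?thesis by (auto simp: Sd_def F3_def)
qed

lemma shift_set:
  fixes \<phi> :: "complex \<Rightarrow> 'b::{banach, second_countable_topology}"
  shows "(set_integrable lborel F3 (\<lambda>z. \<phi> (z + 1)) \<longleftrightarrow> set_integrable lborel (Sd (1/2) (7/2)) \<phi>) \<and>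
         (LINT z:F3|lborel. \<phi> (z + 1)) = (LINT z:Sd (1/2) (7/2)|lborel. \<phi> z)"
proof -
  have e: "(\<lambda>z. indicator F3 z *\<^sub>R \<phi> (z + 1)) = (\<lambda>z. (\<lambda>w. indicator (Sd (1/2) (7/2)) w *\<^sub>R \<phi> w) (z + 1))"
    by (rule ext) (simp add: indicator_def F3_shift1)
  show ?thesis unfolding set_integrable_def set_lebesgue_integral_def e
    by (rule integral_shift)
qed

lemma rfl_set:
  fixes \<phi> :: "complex \<Rightarrow> 'b::{banach, second_countable_topology}"
  assumes S: "\<And>z. z \<in> S \<longleftrightarrow> of_int k - cnj z \<in> S"
  shows "(set_integrable lborel S (\<lambda>z. \<phi> (of_int k - cnj z)) \<longleftrightarrow> set_integrable lborel S \<phi>) \<and>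
         (LINT z:S|lborel. \<phi> (of_int k - cnj z)) = (LINT z:S|lborel. \<phi> z)"
proof -
  have e: "(\<lambda>z. indicator S z *\<^sub>R \<phi> (of_int k - cnj z)) = (\<lambda>z. (\<lambda>w. indicator S w *\<^sub>R \<phi> w) (of_int k - cnj z))"
    by (rule ext) (simp add: indicator_def S[symmetric])
  show ?thesis unfolding set_integrable_def set_lebesgue_integral_def e
    by (rule integral_rfl)
qed

lemma F3_rfl: "z \<in> F3 \<longleftrightarrow> of_int 2 - cnj z \<in> F3"
proof -
  have "(\<forall>n::int. cmod (z - of_int n) \<ge> 1) \<longleftrightarrow> (\<forall>n::int. cmod (of_int 2 - cnj z - of_int n) \<ge> 1)"
  proof -
    have e: "cmod (of_int 2 - cnj z - of_int n) = cmod (z - of_int (2 - n))" for n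
    proof -
      have "of_int 2 - cnj z - of_int n = - cnj (z - of_int (2 - n))" by (simp add: complex_eq_iff)
      then show ?thesis by (simp only: norm_minus_cancel complex_mod_cnj)
    qed
    show ?thesis
    proof
      assume h: "\<forall>n::int. cmod (z - of_int n) \<ge> 1"
      show "\<forall>n::int. cmod (of_int 2 - cnj z - of_int n) \<ge> 1"
      proof
        fix n :: int
        have "cmod (z - of_int (2 - n)) \<ge> 1" using h by blast
        then show "cmod (of_int 2 - cnj z - of_int n) \<ge> 1" by (simp only: e)
      qed
    next
      assume h: "\<forall>n::int. cmod (of_int 2 - cnj z - of_int n) \<ge> 1"
      show "\<forall>n::int. cmod (z - of_int n) \<ge> 1"
      proof
        fix n :: int
        have "cmod (of_int 2 - cnj z - of_int (2 - n)) \<ge> 1" using h by blast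
        then have "cmod (z - of_int (2 - (2 - n))) \<ge> 1" by (simp only: e)
        then show "cmod (z - of_int n) \<ge> 1" by simp
      qed
    qed
  qed
  then show ?thesis by (auto simp: F3_def)
qed

lemma F1_rfl: "z \<in> F1 \<longleftrightarrow> of_int 0 - cnj z \<in> F1"
  by (auto simp: F1_def)

lemma tr_new:
  assumes fn: "f \<in> Maass_new3 R"
  shows "tr f \<in> Maass_new3 R"
proof -
  have f3: "f \<in> Maass_Gamma3 R" using fn by (simp add: Maass_new3_def)
  then have c: "(\<forall>z. z \<notin> UHP \<longrightarrow> f z = 0)" "real_analytic_UHP f"
     "(\<forall>M\<in>Gamma3. \<forall>z\<in>UHP. f (mob M z) = f z)"
     "(\<forall>z\<in>UHP. - ((Im z)^2) * (dxx f z + dyy f z) = of_real (1/4 + R^2) * f z)"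
     "(\<forall>M\<in>SL2Z. \<forall>e>0. \<exists>Y. \<forall>z. Im z > Y \<longrightarrow> cmod (f (mob M z)) < e)"
     "set_integrable lborel F3 (\<lambda>z. (cmod (f z))^2 / (Im z)^2)"
    by (simp_all add: Maass_Gamma3_def Maass_iff)
  have a: "\<forall>z. z \<notin> UHP \<longrightarrow> tr f z = 0"
    using c(1) by (auto simp: tr_def UHP_def)
  have b: "real_analytic_UHP (tr f)" by (rule RA_tr[OF c(2)])
  have ci: "\<forall>M\<in>Gamma3. \<forall>z\<in>UHP. tr f (mob M z) = tr f z"
  proof (intro ballI)
    fix M z assume M: "M \<in> Gamma3" and z: "z \<in> UHP"
    obtain a b c d where Md: "M = (a,b,c,d)" by (cases M) auto
    have det: "a * d - b * c = 1" using M Md by (simp add: Gamma3_def)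
    have N: "(a+c, b+d-a-c, c, d-c) \<in> Gamma3" using normal_T M Md by simp
    have z1: "z + 1 \<in> UHP" using z by (simp add: UHP_def)
    have "tr f (mob M z) = f (mob (a+c, b+d-a-c, c, d-c) (z + 1))"
      using mob_conjT[OF det, of z] z by (simp add: tr_def Md UHP_def)
    also have "\<dots> = f (z + 1)" using c(3) N z1 by blast
    finally show "tr f (mob M z) = tr f z" by (simp add: tr_def)
  qed
  have d: "\<forall>z\<in>UHP. - ((Im z)^2) * (dxx (tr f) z + dyy (tr f) z) = of_real (1/4 + R^2) * tr f z"
  proof
    fix z assume z: "z \<in> UHP"
    then have "z + 1 \<in> UHP" by (simp add: UHP_def)
    with c(4) have "- ((Im (z+1))^2) * (dxx f (z+1) + dyy f (z+1)) = of_real (1/4 + R^2) * f (z+1)" by blast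
    then show "- ((Im z)^2) * (dxx (tr f) z + dyy (tr f) z) = of_real (1/4 + R^2) * tr f z"
      by (simp add: dxx_tr dyy_tr tr_def)
  qed
  have e: "\<forall>M\<in>SL2Z. \<forall>e>0. \<exists>Y. \<forall>z. Im z > Y \<longrightarrow> cmod (tr f (mob M z)) < e" by (rule cusp_tr[OF c(5)])
  define \<psi> where "\<psi> w = (cmod (f w))^2 / (Im w)^2" for w
  have per\<psi>: "\<psi> (z + 3) = \<psi> z" for z using per3[OF f3] by (simp add: \<psi>_def)
  have "set_integrable lborel F3 \<psi>" using c(6) by (simp add: \<psi>_def[abs_def])
  then have "set_integrable lborel (Sd (1/2) (7/2)) \<psi>" using periodic_F3[of \<psi>] per\<psi> by blast
  then have "set_integrable lborel F3 (\<lambda>z. \<psi> (z + 1))" using shift_set[of \<psi>] by blast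
  then have g: "set_integrable lborel F3 (\<lambda>z. (cmod (tr f z))^2 / (Im z)^2)" by (simp add: \<psi>_def tr_def)
  have trG: "tr f \<in> Maass_Gamma3 R" using a b ci d e g by (simp add: Maass_Gamma3_def Maass_iff)
  have orth: "petersson3 (tr f) g = 0" if gf: "g \<in> Maass_full R" for g
  proof -
    define \<phi> where "\<phi> w = f w * cnj (g w) / of_real ((Im w)^2)" for w
    have per\<phi>: "\<phi> (z + 3) = \<phi> z" for z
    proof -
      have "g (z + 3) = g z" using Tinv_full[OF gf, of "z+2"] Tinv_full[OF gf, of "z+1"] Tinv_full[OF gf, of z]
        by (simp add: add.assoc)
      then show ?thesis using per3[OF f3] by (simp add: \<phi>_def)
    qed
    have "petersson3 (tr f) g = (LINT z:F3|lborel. \<phi> (z + 1))"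
      unfolding petersson3_def using Tinv_full[OF gf] by (simp add: \<phi>_def tr_def)
    also have "\<dots> = (LINT z:Sd (1/2) (7/2)|lborel. \<phi> z)" using shift_set[of \<phi>] by blast
    also have "\<dots> = (LINT z:F3|lborel. \<phi> z)" using periodic_F3[of \<phi>] per\<phi> by simp
    also have "\<dots> = petersson3 f g" by (simp add: petersson3_def \<phi>_def)
    also have "\<dots> = 0" using fn gf by (simp add: Maass_new3_def)
    finally show ?thesis .
  qed
  show ?thesis using trG orth by (simp add: Maass_new3_def)
qed

lemma rfl_full:
  assumes gf: "g \<in> Maass_full R"
  shows "rfl 0 g \<in> Maass_full R"
proof -
  have c: "(\<forall>z. z \<notin> UHP \<longrightarrow> g z = 0)" "real_analytic_UHP g"
     "(\<forall>M\<in>SL2Z. \<forall>z\<in>UHP. g (mob M z) = g z)"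
     "(\<forall>z\<in>UHP. - ((Im z)^2) * (dxx g z + dyy g z) = of_real (1/4 + R^2) * g z)"
     "(\<forall>M\<in>SL2Z. \<forall>e>0. \<exists>Y. \<forall>z. Im z > Y \<longrightarrow> cmod (g (mob M z)) < e)"
     "set_integrable lborel F1 (\<lambda>z. (cmod (g z))^2 / (Im z)^2)"
    using gf by (simp_all add: Maass_full_def Maass_iff)
  have a: "\<forall>z. z \<notin> UHP \<longrightarrow> rfl 0 g z = 0"
    using c(1) by (auto simp: rfl_def UHP_def)
  have b: "real_analytic_UHP (rfl 0 g)" by (rule RA_rfl[OF c(2)])
  have ci: "\<forall>M\<in>SL2Z. \<forall>z\<in>UHP. rfl 0 g (mob M z) = rfl 0 g z"
  proof (intro ballI)
    fix M z assume M: "M \<in> SL2Z" and z: "z \<in> UHP"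
    obtain a b c d where Md: "M = (a,b,c,d)" by (cases M) auto
    have det: "a * d - b * c = 1" using M Md by (simp add: SL2Z_def)
    define N where "N = (a - 0 * c, 0 * 0 * c + 0 * d - 0 * a - b, -c, 0 * c + d)"
    have N: "N \<in> SL2Z" using det by (simp add: N_def SL2Z_def)
    have z1: "of_int 0 - cnj z \<in> UHP" using z by (simp add: UHP_def)
    have "rfl 0 g (mob M z) = g (mob N (of_int 0 - cnj z))"
      using mob_rfl[OF det, of z 0] z by (simp only: rfl_def Md N_def UHP_iff)
    also have "\<dots> = g (of_int 0 - cnj z)" using c(3) N z1 by blast
    finally show "rfl 0 g (mob M z) = rfl 0 g z" by (simp only: rfl_def)
  qed
  have d: "\<forall>z\<in>UHP. - ((Im z)^2) * (dxx (rfl 0 g) z + dyy (rfl 0 g) z) = of_real (1/4 + R^2) * rfl 0 g z"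
  proof
    fix z assume z: "z \<in> UHP"
    then have "of_int 0 - cnj z \<in> UHP" by (simp add: UHP_def)
    with c(4) have "- ((Im (of_int 0 - cnj z))^2) * (dxx g (of_int 0 - cnj z) + dyy g (of_int 0 - cnj z))
        = of_real (1/4 + R^2) * g (of_int 0 - cnj z)" by blast
    moreover have "dxx (rfl 0 g) z = dxx g (of_int 0 - cnj z)" using dxx_rfl[OF c(2)] z by (simp add: UHP_def)
    ultimately show "- ((Im z)^2) * (dxx (rfl 0 g) z + dyy (rfl 0 g) z) = of_real (1/4 + R^2) * rfl 0 g z"
      by (simp add: dyy_rfl rfl_def)
  qed
  have e: "\<forall>M\<in>SL2Z. \<forall>e>0. \<exists>Y. \<forall>z. Im z > Y \<longrightarrow> cmod (rfl 0 g (mob M z)) < e" by (rule cusp_rfl[OF c(5)])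
  define \<psi> where "\<psi> w = (cmod (g w))^2 / (Im w)^2" for w
  have "set_integrable lborel F1 \<psi>" using c(6) by (simp add: \<psi>_def[abs_def])
  then have "set_integrable lborel F1 (\<lambda>z. \<psi> (of_int 0 - cnj z))" using rfl_set[of F1 0 \<psi>] F1_rfl by blast
  then have g: "set_integrable lborel F1 (\<lambda>z. (cmod (rfl 0 g z))^2 / (Im z)^2)" by (simp add: \<psi>_def rfl_def)
  show ?thesis using a b ci d e g by (simp add: Maass_full_def Maass_iff)
qed

lemma rfl_new:
  assumes fn: "f \<in> Maass_new3 R"
  shows "rfl 2 f \<in> Maass_new3 R"
proof -
  have f3: "f \<in> Maass_Gamma3 R" using fn by (simp add: Maass_new3_def)
  then have c: "(\<forall>z. z \<notin> UHP \<longrightarrow> f z = 0)" "real_analytic_UHP f"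
     "(\<forall>M\<in>Gamma3. \<forall>z\<in>UHP. f (mob M z) = f z)"
     "(\<forall>z\<in>UHP. - ((Im z)^2) * (dxx f z + dyy f z) = of_real (1/4 + R^2) * f z)"
     "(\<forall>M\<in>SL2Z. \<forall>e>0. \<exists>Y. \<forall>z. Im z > Y \<longrightarrow> cmod (f (mob M z)) < e)"
     "set_integrable lborel F3 (\<lambda>z. (cmod (f z))^2 / (Im z)^2)"
    by (simp_all add: Maass_Gamma3_def Maass_iff)
  have a: "\<forall>z. z \<notin> UHP \<longrightarrow> rfl 2 f z = 0"
    using c(1) by (auto simp: rfl_def UHP_def)
  have b: "real_analytic_UHP (rfl 2 f)" by (rule RA_rfl[OF c(2)])
  have ci: "\<forall>M\<in>Gamma3. \<forall>z\<in>UHP. rfl 2 f (mob M z) = rfl 2 f z"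
  proof (intro ballI)
    fix M z assume M: "M \<in> Gamma3" and z: "z \<in> UHP"
    obtain a b c d where Md: "M = (a,b,c,d)" by (cases M) auto
    have det: "a * d - b * c = 1" using M Md by (simp add: Gamma3_def)
    define N where "N = (a - 2 * c, 2 * 2 * c + 2 * d - 2 * a - b, -c, 2 * c + d)"
    have "N = (a-2*c, 4*c+2*d-2*a-b, -c, 2*c+d)" by (simp add: N_def)
    then have N: "N \<in> Gamma3" using normal_rfl M Md by simp
    have z1: "of_int 2 - cnj z \<in> UHP" using z by (simp add: UHP_def)
    have "rfl 2 f (mob M z) = f (mob N (of_int 2 - cnj z))"
      using mob_rfl[OF det, of z 2] z by (simp only: rfl_def Md N_def UHP_iff)
    also have "\<dots> = f (of_int 2 - cnj z)" using c(3) N z1 by blast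
    finally show "rfl 2 f (mob M z) = rfl 2 f z" by (simp only: rfl_def)
  qed
  have d: "\<forall>z\<in>UHP. - ((Im z)^2) * (dxx (rfl 2 f) z + dyy (rfl 2 f) z) = of_real (1/4 + R^2) * rfl 2 f z"
  proof
    fix z assume z: "z \<in> UHP"
    then have "of_int 2 - cnj z \<in> UHP" by (simp add: UHP_def)
    with c(4) have "- ((Im (of_int 2 - cnj z))^2) * (dxx f (of_int 2 - cnj z) + dyy f (of_int 2 - cnj z))
        = of_real (1/4 + R^2) * f (of_int 2 - cnj z)" by blast
    moreover have "dxx (rfl 2 f) z = dxx f (of_int 2 - cnj z)" using dxx_rfl[OF c(2)] z by (simp add: UHP_def)
    moreover have "dyy (rfl 2 f) z = dyy f (of_int 2 - cnj z)" by (rule dyy_rfl)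
    moreover have "Im (of_int 2 - cnj z) = Im z" by simp
    ultimately show "- ((Im z)^2) * (dxx (rfl 2 f) z + dyy (rfl 2 f) z) = of_real (1/4 + R^2) * rfl 2 f z"
      by (simp only: rfl_def)
  qed
  have e: "\<forall>M\<in>SL2Z. \<forall>e>0. \<exists>Y. \<forall>z. Im z > Y \<longrightarrow> cmod (rfl 2 f (mob M z)) < e" by (rule cusp_rfl[OF c(5)])
  define \<psi> where "\<psi> w = (cmod (f w))^2 / (Im w)^2" for w
  have "set_integrable lborel F3 \<psi>" using c(6) by (simp add: \<psi>_def[abs_def])
  then have "set_integrable lborel F3 (\<lambda>z. \<psi> (of_int 2 - cnj z))" using rfl_set[of F3 2 \<psi>] F3_rfl by blast
  then have g: "set_integrable lborel F3 (\<lambda>z. (cmod (rfl 2 f z))^2 / (Im z)^2)" by (simp add: \<psi>_def rfl_def)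
  have rG: "rfl 2 f \<in> Maass_Gamma3 R" using a b ci d e g by (simp add: Maass_Gamma3_def Maass_iff)
  have orth: "petersson3 (rfl 2 f) g = 0" if gf: "g \<in> Maass_full R" for g
  proof -
    define \<phi> where "\<phi> w = f w * cnj (rfl 0 g w) / of_real ((Im w)^2)" for w
    have gz: "rfl 0 g (of_int 2 - cnj z) = g z" for z
    proof -
      have "rfl 0 g (of_int 2 - cnj z) = g (z - 2)" by (simp add: rfl_def)
      also have "\<dots> = g z" using Tinv_full[OF gf, of "z - 2"] Tinv_full[OF gf, of "z - 1"] by simp
      finally show ?thesis .
    qed
    have "petersson3 (rfl 2 f) g = (LINT z:F3|lborel. \<phi> (of_int 2 - cnj z))"
      unfolding petersson3_def \<phi>_def gz by (simp add: rfl_def)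
    also have "\<dots> = (LINT z:F3|lborel. \<phi> z)" using rfl_set[of F3 2 \<phi>] F3_rfl by blast
    also have "\<dots> = petersson3 f (rfl 0 g)" by (simp add: petersson3_def \<phi>_def)
    also have "\<dots> = 0" using fn rfl_full[OF gf] by (simp add: Maass_new3_def)
    finally show ?thesis .
  qed
  show ?thesis using rG orth by (simp add: Maass_new3_def)
qed

theorem lemma3p1:
  fixes R :: real
  assumes "\<exists>f\<in>Maass_new3 R. f \<noteq> (\<lambda>z. 0)"
  shows "\<exists>f\<in>Maass_new3 R. \<exists>g\<in>Maass_new3 R.
           \<forall>a b :: complex. (\<lambda>z. a * f z + b * g z) = (\<lambda>z. 0) \<longrightarrow> a = 0 \<and> b = 0"
proof -
  obtain f where fn: "f \<in> Maass_new3 R" and f0: "f \<noteq> (\<lambda>z. 0)" using assms by blast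
  obtain z0 where z0: "f z0 \<noteq> 0" using f0 by auto
  have f3: "f \<in> Maass_Gamma3 R" using fn by (simp add: Maass_new3_def)
  show ?thesis
  proof (cases "\<forall>a b :: complex. (\<lambda>z. a * f z + b * tr f z) = (\<lambda>z. 0) \<longrightarrow> a = 0 \<and> b = 0")
    case True
    then show ?thesis using fn tr_new[OF fn] by blast
  next
    case False
    then obtain a b :: complex where ab: "(\<lambda>z. a * f z + b * tr f z) = (\<lambda>z. 0)" and nab: "\<not> (a = 0 \<and> b = 0)"
      by blast
    have abz: "a * f z + b * f (z + 1) = 0" for z using fun_cong[OF ab, of z] by (simp add: tr_def)
    have b0: "b \<noteq> 0"
    proof
      assume "b = 0"
      then have "a * f z0 = 0" using abz[of z0] by simp
      then have "a = 0" using z0 by simp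
      with \<open>b = 0\<close> nab show False by simp
    qed
    define c where "c = - a / b"
    have hc: "f (z + 1) = c * f z" for z
    proof -
      have "b * f (z + 1) = - a * f z" using abz[of z] by (simp add: algebra_simps add_eq_0_iff)
      then show ?thesis using b0 by (simp add: c_def field_simps)
    qed
    have c3: "c ^ 3 = 1"
    proof -
      have "f (z0 + 3) = c ^ 3 * f z0"
        using hc[of z0] hc[of "z0 + 1"] hc[of "z0 + 2"] by (simp add: add.assoc power3_eq_cube)
      moreover have "f (z0 + 3) = f z0" by (rule per3[OF f3])
      ultimately have "(c ^ 3 - 1) * f z0 = 0" by (simp add: algebra_simps)
      then show ?thesis using z0 by simp
    qed
    have c1: "c \<noteq> 1"
    proof
      assume "c = 1"
      then have "\<forall>z. f (z + 1) = f z" using hc by simp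
      from Tinv_zero[OF fn this] f0 show False by simp
    qed
    have c2: "c ^ 2 \<noteq> 1"
    proof
      assume "c ^ 2 = 1"
      then have "c ^ 3 = c" by (simp add: power3_eq_cube power2_eq_square)
      with c3 c1 show False by simp
    qed
    define h where "h = rfl 2 f"
    have hn: "h \<in> Maass_new3 R" unfolding h_def by (rule rfl_new[OF fn])
    have hs: "h z = c * h (z + 1)" for z
    proof -
      have "h z = f ((of_int 2 - cnj z - 1) + 1)" by (simp add: h_def rfl_def)
      also have "\<dots> = c * f (of_int 2 - cnj z - 1)" by (rule hc)
      also have "of_int 2 - cnj z - 1 = of_int 2 - cnj (z + 1)" by simp
      finally show ?thesis by (simp add: h_def rfl_def)
    qed
    have hw: "h (of_int 2 - cnj z0) = f z0" by (simp add: h_def rfl_def)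
    have indep: "\<forall>\<alpha> \<beta> :: complex. (\<lambda>z. \<alpha> * f z + \<beta> * h z) = (\<lambda>z. 0) \<longrightarrow> \<alpha> = 0 \<and> \<beta> = 0"
    proof (intro allI impI)
      fix \<alpha> \<beta> :: complex assume e: "(\<lambda>z. \<alpha> * f z + \<beta> * h z) = (\<lambda>z. 0)"
      have ez: "\<alpha> * f z + \<beta> * h z = 0" for z using fun_cong[OF e, of z] by simp
      have "\<alpha> * (c ^ 2 - 1) * f z = 0" for z
      proof -
        have "\<alpha> * (c * f z) + \<beta> * h (z + 1) = 0" using ez[of "z + 1"] hc[of z] by simp
        then have "c * (\<alpha> * (c * f z) + \<beta> * h (z + 1)) = 0" by simp
        then have "\<alpha> * c ^ 2 * f z + \<beta> * h z = 0" using hs[of z] by (simp add: algebra_simps power2_eq_square)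
        moreover have "\<alpha> * (c ^ 2 - 1) * f z = (\<alpha> * c ^ 2 * f z + \<beta> * h z) - (\<alpha> * f z + \<beta> * h z)"
          by (simp add: algebra_simps)
        ultimately show ?thesis using ez[of z] by simp
      qed
      from this[of z0] have \<alpha>0: "\<alpha> = 0" using c2 z0 by simp
      then have "\<beta> * h (of_int 2 - cnj z0) = 0" using ez[of "of_int 2 - cnj z0"] by simp
      then have "\<beta> = 0" using hw z0 by simp
      with \<alpha>0 show "\<alpha> = 0 \<and> \<beta> = 0" by simp
    qed
    show ?thesis using fn hn indep by blast
  qed
qed


end
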